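(* Let $G$ be a connected simple undirected graph with adjacency matrix $A$, let $\tau>\tau_c^{(1)}(G)$ (so $R_0(G,\tau)=\tau\lambda_1(A)>1$), let $y_\infty(G)>0$ be the endemic steady-state prevalence, and let $0<r<y_\infty(G)$. Then the NIMFA SIS process started at $V(0)=ru$ satisfies $|y(t)-y_\infty(G)|>r$ for all $0\le t<\frac{1}{R_0(G,\tau)-1}\log\left(\frac{y_\infty(G)-r}{r}\right)$. Consequently the upper-transition time satisfies $$\overline{T}(r)\ge \frac{1}{R_0(G,\tau)-1}\log\left(\frac{y_\infty(G)-r}{r}\right).$$
   Context: NIMFA SIS process (time rescaled so that the curing rate is $1$): for a simple undirected graph with $N\times N$ symmetric $0/1$ adjacency matrix $A$ (zero diagonal) and effective infection rate $\tau>0$, the infection probabilities $v_i(t)\in[0,1]$ evolve by $\frac{dv_i}{dt} = -v_i + \tau(1-v_i)\sum_{j=1}^N a_{ij}v_j$, $i=1,\dots,N$, with initial condition $V(0)\in[0,1]^N$. The prevalence is $y(t)=\frac1N\sum_i v_i(t)$; $u$ is the all-one vector. $\lambda_1(A)$ is the largest eigenvalue of $A$, $\tau_c^{(1)}(G)=1/\lambda_1(A)$, $R_0(G,\tau)=\tau\lambda_1(A)$. For a connected graph and $\tau>\tau_c^{(1)}(G)$ the system has a unique equilibrium $V_\infty$ with positive entries, attracting every $V(0)\ne 0$; $y_\infty(G)$ is its prevalence. The upper-transition time is $\overline{T}(r)=\min\{t\ge 0: |y(t)-y_\infty|\le r \text{ for all } V(0) \text{ with } v_i(0)\in[r,1]\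 \forall i\}$. *)

theory Defs
  imports Complex_Main
begin

definition adjacency_matrix :: "('n::finite \<Rightarrow> 'n \<Rightarrow> real) \<Rightarrow> bool" where
  "adjacency_matrix A \<longleftrightarrow>
     (\<forall>i j. A i j = 0 \<or> A i j = 1) \<and> (\<forall>i j. A i j = A j i) \<and> (\<forall>i. A i i = 0)"

definition connected_graph :: "('n::finite \<Rightarrow> 'n \<Rightarrow> real) \<Rightarrow> bool" where
  "connected_graph A \<longleftrightarrow> (\<forall>i j. (\<lambda>x y. A x y = 1)\<^sup>*\<^sup>* i j)"

definition is_eigenvalue :: "('n::finite \<Rightarrow> 'n \<Rightarrow> real) \<Rightarrow> real \<Rightarrow> bool" where
  "is_eigenvalue A l \<longleftrightarrow> (\<exists>v::'n \<Rightarrow> real. v \<noteq> (\<lambda>_. 0) \<and> (\<forall>i. (\<Sum>j\<in>UNIV. A i j * v j) = l * v i))"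

text \<open>Largest eigenvalue (A symmetric, so all eigenvalues are real).\<close>
definition lambda1 :: "('n::finite \<Rightarrow> 'n \<Rightarrow> real) \<Rightarrow> real" where
  "lambda1 A = Max {l. is_eigenvalue A l}"

definition R0 :: "('n::finite \<Rightarrow> 'n \<Rightarrow> real) \<Rightarrow> real \<Rightarrow> real" where
  "R0 A \<tau> = \<tau> * lambda1 A"

definition nimfa_rhs :: "('n::finite \<Rightarrow> 'n \<Rightarrow> real) \<Rightarrow> real \<Rightarrow> ('n \<Rightarrow> real) \<Rightarrow> 'n \<Rightarrow> real" where
  "nimfa_rhs A \<tau> v i = - v i + \<tau> * (1 - v i) * (\<Sum>j\<in>UNIV. A i j * v j)"

definition nimfa_solution :: "('n::finite \<Rightarrow> 'n \<Rightarrow> real) \<Rightarrow> real \<Rightarrow> (real \<Rightarrow> 'n \<Rightarrow> real) \<Rightarrow> bool" where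
  "nimfa_solution A \<tau> V \<longleftrightarrow>
     (\<forall>t\<ge>0. \<forall>i. ((\<lambda>s. V s i) has_real_derivative nimfa_rhs A \<tau> (V t) i) (at t within {0..}))"

definition prevalence :: "('n::finite \<Rightarrow> real) \<Rightarrow> real" where
  "prevalence v = (\<Sum>i\<in>UNIV. v i) / real (card (UNIV :: 'n set))"

definition endemic_equilibrium :: "('n::finite \<Rightarrow> 'n \<Rightarrow> real) \<Rightarrow> real \<Rightarrow> 'n \<Rightarrow> real" where
  "endemic_equilibrium A \<tau> = (THE v. (\<forall>i. 0 < v i \<and> v i \<le> 1) \<and> (\<forall>i. nimfa_rhs A \<tau> v i = 0))"

definition y_inf :: "('n::finite \<Rightarrow> 'n \<Rightarrow> real) \<Rightarrow> real \<Rightarrow> real" where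
  "y_inf A \<tau> = prevalence (endemic_equilibrium A \<tau>)"

definition upper_transition_time :: "('n::finite \<Rightarrow> 'n \<Rightarrow> real) \<Rightarrow> real \<Rightarrow> real \<Rightarrow> real" where
  "upper_transition_time A \<tau> r = Inf {t. t \<ge> 0 \<and>
     (\<forall>V. nimfa_solution A \<tau> V \<and> (\<forall>i. r \<le> V 0 i \<and> V 0 i \<le> 1) \<longrightarrow>
          \<bar>prevalence (V t) - y_inf A \<tau>\<bar> \<le> r)}"

end

theory Submission
  imports Defs "HOL-Analysis.Analysis"
begin

lemma deriv_within_pos:
  fixes f :: "real \<Rightarrow> real"
  assumes "(f has_real_derivative D) (at t within {0..})" "t > 0"
  shows "(f has_real_derivative D) (at t)"
proof -
  have "t \<in> interior {0::real..}" using assms(2) by simp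
  then have "at t within {0..} = at t" by (rule at_within_interior)
  with assms(1) show ?thesis by simp
qed

lemma gronwall0:
  fixes \<phi> d :: "real \<Rightarrow> real" and C T :: real
  assumes der: "\<And>t. 0 \<le> t \<Longrightarrow> t \<le> T \<Longrightarrow> (\<phi> has_real_derivative d t) (at t within {0..})"
    and le: "\<And>t. 0 \<le> t \<Longrightarrow> t \<le> T \<Longrightarrow> d t \<le> C * \<phi> t"
    and init: "\<phi> 0 \<le> 0"
    and t: "0 \<le> t" "t \<le> T"
  shows "\<phi> t \<le> 0"
proof -
  define \<psi> where "\<psi> s = \<phi> s * exp (- C * s)" for s
  have dpsi: "(\<psi> has_real_derivative (d s * exp (- C * s) + \<phi> s * (exp (- C * s) * (- C)))) (at s within {0..})"
    if "0 \<le> s" "s \<le> T" for s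
  proof -
    have e: "((\<lambda>s. exp (- C * s)) has_real_derivative exp (- C * s) * (- C)) (at s within {0..})"
      by (auto intro!: derivative_eq_intros)
    show ?thesis using DERIV_mult[OF der[OF that] e] unfolding \<psi>_def by (simp add: algebra_simps)
  qed
  have "\<psi> t \<le> \<psi> 0"
  proof (rule DERIV_nonpos_imp_decreasing_open[OF t(1)])
    fix x assume x: "0 < x" "x < t"
    show "\<exists>y. DERIV \<psi> x :> y \<and> y \<le> 0"
    proof (intro exI conjI)
      show "DERIV \<psi> x :> (d x * exp (- C * x) + \<phi> x * (exp (- C * x) * (- C)))"
        using dpsi[of x] x t by (intro deriv_within_pos) auto
      have "d x * exp (- C * x) \<le> C * \<phi> x * exp (- C * x)"
        using le[of x] x t by (intro mult_right_mono) auto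
      then show "d x * exp (- C * x) + \<phi> x * (exp (- C * x) * (- C)) \<le> 0"
        by (simp add: algebra_simps)
    qed
  next
    have "continuous (at s within {0..t}) \<psi>" if "s \<in> {0..t}" for s
    proof -
      have "continuous (at s within {0..}) \<psi>"
        using dpsi[of s] that t by (intro DERIV_continuous) auto
      then show ?thesis by (rule continuous_within_subset) auto
    qed
    then show "continuous_on {0..t} \<psi>" by (simp add: continuous_on_eq_continuous_within)
  qed
  then have "\<phi> t * exp (- C * t) \<le> 0" using init unfolding \<psi>_def by simp
  then show ?thesis by (simp add: mult_le_0_iff)
qed

lemma maxsq_deriv: "((\<lambda>x::real. (max x 0)^2) has_real_derivative 2 * max x 0) (at x)"
proof (cases "x = 0")
  case True
  have l: "((\<lambda>y. max y 0) \<longlongrightarrow> (0::real)) (at (0::real))"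
  proof -
    have "((\<lambda>y. max y 0) \<longlongrightarrow> max 0 (0::real)) (at (0::real))" by (intro tendsto_intros)
    then show ?thesis by simp
  qed
  have ev: "\<forall>\<^sub>F y in at (0::real). max y 0 = (max y 0 ^ 2 - max 0 0 ^ 2) / (y - 0)"
    by (auto simp: eventually_at_filter max_def power2_eq_square)
  have "((\<lambda>y. (max y 0 ^ 2 - max 0 0 ^ 2) / (y - 0)) \<longlongrightarrow> (0::real)) (at (0::real))"
    by (rule Lim_transform_eventually[OF l ev])
  then show ?thesis unfolding True has_field_derivative_iff by simp
next
  case False
  then show ?thesis
  proof (cases "x > 0")
    case True
    have "((\<lambda>x::real. x^2) has_real_derivative 2 * max x 0) (at x)"
      using True by (auto intro!: derivative_eq_intros)
    then show ?thesis
      apply (rule has_field_derivative_transform_within_open[where S="{0<..}"])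
      using True by auto
  next
    case f: False
    have "((\<lambda>x::real. 0) has_real_derivative 2 * max x 0) (at x)" using f False by simp
    then show ?thesis
      apply (rule has_field_derivative_transform_within_open[where S="{..<0}"])
      using f False by auto
  qed
qed


definition clampv :: "('n::finite \<Rightarrow> real) \<Rightarrow> 'n \<Rightarrow> real" where
  "clampv v j = max 0 (min 1 (v j))"

definition grhs :: "('n::finite \<Rightarrow> 'n \<Rightarrow> real) \<Rightarrow> real \<Rightarrow> ('n \<Rightarrow> real) \<Rightarrow> 'n \<Rightarrow> real" where
  "grhs A \<tau> v i = nimfa_rhs A \<tau> (clampv v) i"

abbreviation NN :: "'n::finite itself \<Rightarrow> real" where
  "NN _ \<equiv> real (card (UNIV :: 'n set))"

lemma adjD: assumes "adjacency_matrix A" shows "0 \<le> A i j" "A i j \<le> 1" "A i j = A j i" "A i i = 0"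
  using assms unfolding adjacency_matrix_def by (metis order.refl zero_le_one)+

lemma clamp_bounds: "0 \<le> clampv v j" "clampv v j \<le> 1"
  unfolding clampv_def by auto

lemma clamp_lip: "\<bar>clampv v j - clampv w j\<bar> \<le> \<bar>v j - w j\<bar>"
  unfolding clampv_def by (auto simp: max_def min_def)

lemma sumA_bound:
  fixes A :: "'n::finite \<Rightarrow> 'n \<Rightarrow> real"
  assumes "adjacency_matrix A" "\<And>j. 0 \<le> d j" "\<And>j. d j \<le> 1"
  shows "0 \<le> (\<Sum>j\<in>UNIV. A i j * d j)" "(\<Sum>j\<in>UNIV. A i j * d j) \<le> NN TYPE('n)"
proof -
  show "0 \<le> (\<Sum>j\<in>UNIV. A i j * d j)" using adjD[OF assms(1)] assms by (intro sum_nonneg) auto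
  have "(\<Sum>j\<in>UNIV. A i j * d j) \<le> (\<Sum>j\<in>(UNIV::'n set). 1)"
    using adjD[OF assms(1)] assms by (intro sum_mono) (simp add: mult_le_one)
  then show "(\<Sum>j\<in>UNIV. A i j * d j) \<le> NN TYPE('n)" by simp
qed

lemma sumA_diff:
  fixes A :: "'n::finite \<Rightarrow> 'n \<Rightarrow> real"
  assumes "adjacency_matrix A"
  shows "\<bar>\<Sum>j\<in>UNIV. A i j * e j\<bar> \<le> (\<Sum>j\<in>UNIV. \<bar>e j\<bar>)"
proof -
  have "\<bar>\<Sum>j\<in>UNIV. A i j * e j\<bar> \<le> (\<Sum>j\<in>UNIV. \<bar>A i j * e j\<bar>)" by (rule sum_abs)
  also have "\<dots> \<le> (\<Sum>j\<in>UNIV. \<bar>e j\<bar>)"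
    using adjD[OF assms] by (intro sum_mono) (simp add: abs_mult mult_left_le_one_le)
  finally show ?thesis .
qed

lemma rhs_lip01:
  fixes A :: "'n::finite \<Rightarrow> 'n \<Rightarrow> real"
  assumes "adjacency_matrix A" "\<tau> \<ge> 0"
    and c: "\<And>j. 0 \<le> c j" "\<And>j. c j \<le> 1" and d: "\<And>j. 0 \<le> d j" "\<And>j. d j \<le> 1"
  shows "\<bar>nimfa_rhs A \<tau> c i - nimfa_rhs A \<tau> d i\<bar> \<le> (1 + \<tau> + \<tau> * NN TYPE('n)) * (\<Sum>j\<in>UNIV. \<bar>c j - d j\<bar>)"
proof -
  define D where "D = (\<Sum>j\<in>UNIV. \<bar>c j - d j\<bar>)"
  define a where "a = c i - d i"
  define b where "b = 1 - c i"
  define e where "e = (\<Sum>j\<in>UNIV. A i j * (c j - d j))"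
  define f where "f = (\<Sum>j\<in>UNIV. A i j * d j)"
  have id: "nimfa_rhs A \<tau> c i - nimfa_rhs A \<tau> d i = - a + \<tau> * (b * e - a * f)"
    unfolding nimfa_rhs_def a_def b_def e_def f_def
    by (simp add: sum_subtractf right_diff_distrib algebra_simps)
  have ha: "\<bar>a\<bar> \<le> D" unfolding a_def D_def
    by (rule member_le_sum[where f="\<lambda>j. \<bar>c j - d j\<bar>"]) auto
  have hb: "\<bar>b\<bar> \<le> 1" using c[of i] unfolding b_def by auto
  have he: "\<bar>e\<bar> \<le> D" unfolding e_def D_def by (rule sumA_diff[OF assms(1)])
  have hf: "\<bar>f\<bar> \<le> NN TYPE('n)" using sumA_bound[OF assms(1) d, of i] unfolding f_def by simp
  have "\<bar>b * e\<bar> \<le> 1 * D" unfolding abs_mult by (rule mult_mono) (use hb he in auto)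
  moreover have "\<bar>a * f\<bar> \<le> D * NN TYPE('n)" unfolding abs_mult by (rule mult_mono) (use ha hf in auto)
  ultimately have "\<bar>b * e - a * f\<bar> \<le> D + D * NN TYPE('n)" by linarith
  then have "\<tau> * \<bar>b * e - a * f\<bar> \<le> \<tau> * (D + D * NN TYPE('n))" using assms(2) by (rule mult_left_mono)
  moreover have "\<bar>\<tau> * (b * e - a * f)\<bar> = \<tau> * \<bar>b * e - a * f\<bar>" using assms(2) by (simp add: abs_mult)
  ultimately have "\<bar>- a + \<tau> * (b * e - a * f)\<bar> \<le> D + \<tau> * (D + D * NN TYPE('n))"
    using ha abs_triangle_ineq[of "-a" "\<tau> * (b * e - a * f)"] by simp
  then show ?thesis unfolding id D_def[symmetric] by (simp add: algebra_simps)
qed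

lemma grhs_lip:
  fixes A :: "'n::finite \<Rightarrow> 'n \<Rightarrow> real"
  assumes "adjacency_matrix A" "\<tau> \<ge> 0"
  shows "\<bar>grhs A \<tau> v i - grhs A \<tau> w i\<bar> \<le> (1 + \<tau> + \<tau> * NN TYPE('n)) * (\<Sum>j\<in>UNIV. \<bar>v j - w j\<bar>)"
proof -
  have "\<bar>grhs A \<tau> v i - grhs A \<tau> w i\<bar> \<le> (1 + \<tau> + \<tau> * NN TYPE('n)) * (\<Sum>j\<in>UNIV. \<bar>clampv v j - clampv w j\<bar>)"
    unfolding grhs_def by (rule rhs_lip01[OF assms]) (auto simp: clamp_bounds)
  also have "\<dots> \<le> (1 + \<tau> + \<tau> * NN TYPE('n)) * (\<Sum>j\<in>UNIV. \<bar>v j - w j\<bar>)"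
    using assms(2) by (intro mult_left_mono sum_mono clamp_lip) auto
  finally show ?thesis .
qed

lemma grhs_bound:
  fixes A :: "'n::finite \<Rightarrow> 'n \<Rightarrow> real"
  assumes "adjacency_matrix A" "\<tau> \<ge> 0"
  shows "\<bar>grhs A \<tau> v i\<bar> \<le> 1 + \<tau> * NN TYPE('n)"
proof -
  define c where "c = clampv v"
  have c: "\<And>j. 0 \<le> c j" "\<And>j. c j \<le> 1" unfolding c_def by (auto simp: clamp_bounds)
  define f where "f = (\<Sum>j\<in>UNIV. A i j * c j)"
  have hf: "0 \<le> f" "f \<le> NN TYPE('n)" using sumA_bound[OF assms(1) c, of i] unfolding f_def by auto
  have "\<bar>(1 - c i) * f\<bar> \<le> 1 * NN TYPE('n)" unfolding abs_mult by (rule mult_mono) (use c[of i] hf in auto)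
  then have "\<tau> * \<bar>(1 - c i) * f\<bar> \<le> \<tau> * NN TYPE('n)" using assms(2) by (metis mult_left_mono mult_1)
  then show ?thesis unfolding grhs_def nimfa_rhs_def c_def[symmetric] f_def[symmetric]
  proof -
    have "\<bar>\<tau> * (1 - c i) * f\<bar> = \<tau> * \<bar>(1 - c i) * f\<bar>" using assms(2) by (simp add: abs_mult)
    then show "\<bar>- c i + \<tau> * (1 - c i) * f\<bar> \<le> 1 + \<tau> * NN TYPE('n)"
      using abs_triangle_ineq[of "- c i" "\<tau> * (1 - c i) * f"] c[of i] \<open>\<tau> * \<bar>(1 - c i) * f\<bar> \<le> \<tau> * NN TYPE('n)\<close> by simp
  qed
qed

lemma grhs_cont:
  fixes A :: "'n::finite \<Rightarrow> 'n \<Rightarrow> real"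
  assumes "\<And>j. continuous_on S (\<lambda>s. f s j)"
  shows "continuous_on S (\<lambda>s. grhs A \<tau> (f s) i)"
  unfolding grhs_def nimfa_rhs_def clampv_def
  by (intro continuous_intros assms)


primrec pic :: "('n::finite \<Rightarrow> 'n \<Rightarrow> real) \<Rightarrow> real \<Rightarrow> ('n \<Rightarrow> real) \<Rightarrow> nat \<Rightarrow> real \<Rightarrow> 'n \<Rightarrow> real" where
  "pic A \<tau> x0 0 = (\<lambda>t. x0)"
| "pic A \<tau> x0 (Suc k) = (\<lambda>t i. x0 i + integral {0..t} (\<lambda>s. grhs A \<tau> (pic A \<tau> x0 k s) i))"

lemma pic_cont: "continuous_on {0..T} (\<lambda>s. pic A \<tau> x0 k s i)"
proof (induction k arbitrary: i)
  case 0
  then show ?case by simp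
next
  case (Suc k)
  have "continuous_on {0..T} (\<lambda>s. grhs A \<tau> (pic A \<tau> x0 k s) i)"
    by (rule grhs_cont) (rule Suc.IH)
  then have "(\<lambda>s. grhs A \<tau> (pic A \<tau> x0 k s) i) integrable_on {0..T}"
    by (rule integrable_continuous_real)
  then have "continuous_on {0..T} (\<lambda>t. integral {0..t} (\<lambda>s. grhs A \<tau> (pic A \<tau> x0 k s) i))"
    by (rule indefinite_integral_continuous_1)
  then show ?case by (auto intro!: continuous_intros)
qed

lemma pic_integrable: "(\<lambda>s. grhs A \<tau> (pic A \<tau> x0 k s) i) integrable_on {0..T}"
  by (intro integrable_continuous_real grhs_cont pic_cont)

lemma power_has_integral:
  fixes t c :: real assumes "0 \<le> t"
  shows "((\<lambda>s. c * s ^ n) has_integral c * t ^ Suc n / Suc n) {0..t}"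
proof -
  have d: "((\<lambda>s. c * s ^ Suc n / Suc n) has_real_derivative c * x ^ n) (at x within S)" for x S
  proof -
    have "((\<lambda>s. c * s ^ Suc n / Suc n) has_real_derivative c * (real (Suc n) * x ^ n) / Suc n) (at x within S)"
      by (intro derivative_eq_intros DERIV_pow) auto
    then show ?thesis by (simp del: of_nat_Suc)
  qed
  have "((\<lambda>s. c * s ^ n) has_integral (c * t ^ Suc n / Suc n - c * 0 ^ Suc n / Suc n)) {0..t}"
    by (rule fundamental_theorem_of_calculus[OF assms])
       (use d in \<open>auto simp: has_real_derivative_iff_has_vector_derivative[symmetric] simp del: of_nat_Suc\<close>)
  then show ?thesis by simp
qed

context
  fixes A :: "'n::finite \<Rightarrow> 'n \<Rightarrow> real" and \<tau> :: real
  assumes adj: "adjacency_matrix A" and tau: "\<tau> \<ge> 0"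
begin

definition "KK = 1 + \<tau> + \<tau> * NN TYPE('n)"
definition "MM = 1 + \<tau> * NN TYPE('n)"
definition "LL = KK * NN TYPE('n)"

lemma NN_ge1: "NN TYPE('n) \<ge> 1"
  by (simp add: Suc_le_eq)

lemma consts_pos: "KK > 0" "MM > 0" "LL > 0"
  using tau NN_ge1 unfolding KK_def MM_def LL_def by (auto intro!: add_pos_nonneg mult_pos_pos)

lemma pic_diff_bound:
  "0 \<le> t \<Longrightarrow> \<bar>pic A \<tau> x0 (Suc k) t i - pic A \<tau> x0 k t i\<bar> \<le> MM * LL ^ k * t ^ Suc k / fact (Suc k)"
proof (induction k arbitrary: t i)
  case 0
  have "norm (integral {0..t} (\<lambda>s. grhs A \<tau> x0 i)) \<le> integral {0..t} (\<lambda>s. MM)"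
    by (rule integral_norm_bound_integral) (use grhs_bound[OF adj tau] in \<open>auto simp: MM_def\<close>)
  then show ?case using 0 by (simp add: mult.commute)
next
  case (Suc k)
  let ?g = "\<lambda>k s. grhs A \<tau> (pic A \<tau> x0 k s) i"
  have eq: "pic A \<tau> x0 (Suc (Suc k)) t i - pic A \<tau> x0 (Suc k) t i
        = integral {0..t} (\<lambda>s. ?g (Suc k) s - ?g k s)"
  proof -
    have "pic A \<tau> x0 (Suc (Suc k)) t i - pic A \<tau> x0 (Suc k) t i
        = integral {0..t} (?g (Suc k)) - integral {0..t} (?g k)"
      by (simp only: pic.simps(2))
    also have "\<dots> = integral {0..t} (\<lambda>s. ?g (Suc k) s - ?g k s)"
      by (rule integral_diff[symmetric]) (rule pic_integrable)+
    finally show ?thesis .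
  qed
  have "\<bar>pic A \<tau> x0 (Suc (Suc k)) t i - pic A \<tau> x0 (Suc k) t i\<bar> = \<bar>integral {0..t} (\<lambda>s. ?g (Suc k) s - ?g k s)\<bar>"
    unfolding eq ..
  also have "\<dots> \<le> integral {0..t} (\<lambda>s. (KK * NN TYPE('n) * (MM * LL ^ k / fact (Suc k))) * s ^ Suc k)"
    unfolding real_norm_def[symmetric]
  proof (rule integral_norm_bound_integral)
    show "(\<lambda>s. ?g (Suc k) s - ?g k s) integrable_on {0..t}"
      by (intro integrable_diff pic_integrable)
    show "(\<lambda>s. KK * NN TYPE('n) * (MM * LL ^ k / fact (Suc k)) * s ^ Suc k) integrable_on {0..t}"
      by (intro integrable_continuous_real continuous_intros)
    fix s assume s: "s \<in> {0..t}"
    have "\<bar>?g (Suc k) s - ?g k s\<bar> \<le> KK * (\<Sum>j\<in>UNIV. \<bar>pic A \<tau> x0 (Suc k) s j - pic A \<tau> x0 k s j\<bar>)"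
      unfolding KK_def by (rule grhs_lip[OF adj tau])
    also have "\<dots> \<le> KK * (\<Sum>j\<in>(UNIV::'n set). MM * LL ^ k * s ^ Suc k / fact (Suc k))"
      using consts_pos s by (intro mult_left_mono sum_mono Suc.IH) auto
    also have "\<dots> = KK * NN TYPE('n) * (MM * LL ^ k / fact (Suc k)) * s ^ Suc k"
      by simp
    finally show "norm (?g (Suc k) s - ?g k s) \<le> KK * NN TYPE('n) * (MM * LL ^ k / fact (Suc k)) * s ^ Suc k" by simp
  qed
  also have "\<dots> = KK * NN TYPE('n) * (MM * LL ^ k / fact (Suc k)) * t ^ Suc (Suc k) / Suc (Suc k)"
    using power_has_integral[OF Suc.prems] by (rule integral_unique)
  also have "\<dots> = MM * LL ^ Suc k * t ^ Suc (Suc k) / fact (Suc (Suc k))"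
    unfolding LL_def by (simp add: field_simps del: of_nat_Suc)
  finally show ?case .
qed


lemma bsum: assumes "0 \<le> t" shows "summable (\<lambda>m. MM * LL ^ m * t ^ Suc m / fact (Suc m))"
proof -
  have "summable (\<lambda>n. inverse (fact n) * (LL * t) ^ n)" by (rule summable_exp)
  then have "summable (\<lambda>n. inverse (fact (Suc n)) * (LL * t) ^ Suc n)"
    by (subst summable_Suc_iff)
  then have "summable (\<lambda>n. MM / LL * (inverse (fact (Suc n)) * (LL * t) ^ Suc n))"
    by (rule summable_mult)
  moreover have "MM / LL * (inverse (fact (Suc n)) * (LL * t) ^ Suc n) = MM * LL ^ n * t ^ Suc n / fact (Suc n)" for n
    using consts_pos by (simp add: power_mult_distrib field_simps del: fact_Suc)
  ultimately show ?thesis by simp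
qed

definition Xlim :: "('n \<Rightarrow> real) \<Rightarrow> real \<Rightarrow> 'n \<Rightarrow> real" where
  "Xlim x0 t i = x0 i + suminf (\<lambda>m. pic A \<tau> x0 (Suc m) t i - pic A \<tau> x0 m t i)"

lemma pic_telescope: "x0 i + (\<Sum>m<n. pic A \<tau> x0 (Suc m) t i - pic A \<tau> x0 m t i) = pic A \<tau> x0 n t i"
  by (subst sum_lessThan_telescope) simp

lemma unif: assumes "0 \<le> T"
  shows "uniform_limit {0..T} (\<lambda>n s. pic A \<tau> x0 n s i) (\<lambda>s. Xlim x0 s i) sequentially"
proof -
  have W: "uniform_limit {0..T} (\<lambda>n s. \<Sum>m<n. pic A \<tau> x0 (Suc m) s i - pic A \<tau> x0 m s i)
      (\<lambda>s. suminf (\<lambda>m. pic A \<tau> x0 (Suc m) s i - pic A \<tau> x0 m s i)) sequentially"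
  proof (rule Weierstrass_m_test[OF _ bsum[OF assms]])
    fix n s assume s: "s \<in> {0..T}"
    have "\<bar>pic A \<tau> x0 (Suc n) s i - pic A \<tau> x0 n s i\<bar> \<le> MM * LL ^ n * s ^ Suc n / fact (Suc n)"
      using s by (intro pic_diff_bound) auto
    also have "\<dots> \<le> MM * LL ^ n * T ^ Suc n / fact (Suc n)"
      using s consts_pos by (intro divide_right_mono mult_left_mono power_mono) auto
    finally show "norm (pic A \<tau> x0 (Suc n) s i - pic A \<tau> x0 n s i) \<le> MM * LL ^ n * T ^ Suc n / fact (Suc n)"
      by simp
  qed
  have "uniform_limit {0..T} (\<lambda>n s. x0 i + (\<Sum>m<n. pic A \<tau> x0 (Suc m) s i - pic A \<tau> x0 m s i))
      (\<lambda>s. x0 i + suminf (\<lambda>m. pic A \<tau> x0 (Suc m) s i - pic A \<tau> x0 m s i)) sequentially"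
    using uniform_limit_add[OF uniform_limit_const W] by simp
  then show ?thesis unfolding pic_telescope Xlim_def .
qed

lemma Xcont: assumes "0 \<le> T" shows "continuous_on {0..T} (\<lambda>s. Xlim x0 s i)"
  by (rule uniform_limit_theorem[OF _ unif[OF assms]]) (auto intro: always_eventually pic_cont)

lemma Xcont_all: assumes "0 \<le> T" shows "continuous_on {0..T} (\<lambda>s. grhs A \<tau> (Xlim x0 s) i)"
  by (intro grhs_cont Xcont assms)

lemma g_unif: assumes "0 \<le> T"
  shows "uniform_limit {0..T} (\<lambda>n s. grhs A \<tau> (pic A \<tau> x0 n s) i) (\<lambda>s. grhs A \<tau> (Xlim x0 s) i) sequentially"
proof (rule uniform_limitI)
  fix e :: real assume e: "0 < e"
  define \<delta> where "\<delta> = e / (KK * NN TYPE('n))"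
  have \<delta>: "\<delta> > 0" unfolding \<delta>_def using e consts_pos NN_ge1 by auto
  have "\<forall>\<^sub>F n in sequentially. \<forall>j. \<forall>x\<in>{0..T}. dist (pic A \<tau> x0 n x j) (Xlim x0 x j) < \<delta>"
    by (intro eventually_all_finite uniform_limitD[OF unif[OF assms] \<delta>])
  then show "\<forall>\<^sub>F n in sequentially. \<forall>x\<in>{0..T}. dist (grhs A \<tau> (pic A \<tau> x0 n x) i) (grhs A \<tau> (Xlim x0 x) i) < e"
  proof (rule eventually_mono, intro ballI)
    fix n x assume H: "\<forall>j. \<forall>x\<in>{0..T}. dist (pic A \<tau> x0 n x j) (Xlim x0 x j) < \<delta>" and x: "x \<in> {0..T}"
    have "\<bar>grhs A \<tau> (pic A \<tau> x0 n x) i - grhs A \<tau> (Xlim x0 x) i\<bar> \<le> KK * (\<Sum>j\<in>UNIV. \<bar>pic A \<tau> x0 n x j - Xlim x0 x j\<bar>)"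
      unfolding KK_def by (rule grhs_lip[OF adj tau])
    also have "\<dots> < KK * (\<Sum>j\<in>(UNIV::'n set). \<delta>)"
      using H x consts_pos by (intro mult_strict_left_mono sum_strict_mono) (auto simp: dist_real_def)
    also have "\<dots> = e" unfolding \<delta>_def using consts_pos NN_ge1 by simp
    finally show "dist (grhs A \<tau> (pic A \<tau> x0 n x) i) (grhs A \<tau> (Xlim x0 x) i) < e"
      by (simp add: dist_real_def)
  qed
qed

lemma inteq: assumes "0 \<le> t"
  shows "Xlim x0 t i = x0 i + integral {0..t} (\<lambda>s. grhs A \<tau> (Xlim x0 s) i)"
proof -
  obtain I J where I: "\<And>n. ((\<lambda>s. grhs A \<tau> (pic A \<tau> x0 n s) i) has_integral I n) (cbox 0 t)"
    and J: "((\<lambda>s. grhs A \<tau> (Xlim x0 s) i) has_integral J) (cbox 0 t)" and lim: "I \<longlonglongrightarrow> J"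
    by (rule uniform_limit_integral_cbox[where a=0 and b=t and F=sequentially and g="\<lambda>s. grhs A \<tau> (Xlim x0 s) i" and f="\<lambda>n s. grhs A \<tau> (pic A \<tau> x0 n s) i"])
       (use g_unif[OF assms] in \<open>auto intro: grhs_cont pic_cont\<close>)
  have eq: "pic A \<tau> x0 (Suc n) t i = x0 i + I n" for n
    using integral_unique[OF I[of n]] by simp
  have "(\<lambda>n. pic A \<tau> x0 (Suc n) t i) \<longlonglongrightarrow> x0 i + J"
    unfolding eq by (intro tendsto_intros lim)
  moreover have "(\<lambda>n. pic A \<tau> x0 n t i) \<longlonglongrightarrow> Xlim x0 t i"
    using tendsto_uniform_limitI[OF unif[OF assms], of t] assms by auto
  then have "(\<lambda>n. pic A \<tau> x0 (Suc n) t i) \<longlonglongrightarrow> Xlim x0 t i"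
    by (rule LIMSEQ_Suc)
  ultimately have "Xlim x0 t i = x0 i + J" by (rule LIMSEQ_unique[rotated])
  then show ?thesis using integral_unique[OF J] by simp
qed

lemma Xder: assumes "0 \<le> t"
  shows "((\<lambda>s. Xlim x0 s i) has_real_derivative grhs A \<tau> (Xlim x0 t) i) (at t within {0..})"
proof -
  let ?G = "\<lambda>s. grhs A \<tau> (Xlim x0 s) i"
  have "((\<lambda>u. integral {0..u} ?G) has_vector_derivative ?G t) (at t within {0..t+1})"
    by (rule integral_has_vector_derivative) (use assms Xcont_all[of "t+1"] in auto)
  then have "((\<lambda>u. integral {0..u} ?G) has_real_derivative ?G t) (at t within {0..t+1})"
    by (simp add: has_real_derivative_iff_has_vector_derivative)
  from DERIV_add[OF DERIV_const this, of "x0 i"]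
  have "((\<lambda>u. x0 i + integral {0..u} ?G) has_real_derivative ?G t) (at t within {0..t+1})" by simp
  then have "((\<lambda>s. Xlim x0 s i) has_real_derivative ?G t) (at t within {0..t+1})"
    by (rule has_field_derivative_transform_within[where d=1]) (use assms inteq in auto)
  moreover have "at t within {0..t+1} = at t within {0..}"
    by (rule at_within_nhd[where S="{..<t+1}"]) auto
  ultimately show ?thesis by simp
qed

lemma X0: "Xlim x0 0 = x0"
  using inteq[of 0] by (auto simp: fun_eq_iff)

end


lemma maxsq_chain:
  fixes h :: "real \<Rightarrow> real"
  assumes "(h has_real_derivative d) (at t within S)"
  shows "((\<lambda>s. (max (h s) 0)^2) has_real_derivative 2 * max (h t) 0 * d) (at t within S)"
  using DERIV_chain2[OF maxsq_deriv assms] .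

lemma rhs_diff_ident:
  "nimfa_rhs A \<tau> V i - nimfa_rhs A \<tau> W i = - (V i - W i) + \<tau> * ((1 - V i) * (\<Sum>j\<in>UNIV. A i j * (V j - W j)) - (V i - W i) * (\<Sum>j\<in>UNIV. A i j * W j))"
  unfolding nimfa_rhs_def by (simp add: sum_subtractf right_diff_distrib algebra_simps)

lemma cs_abs:
  fixes f :: "'n::finite \<Rightarrow> real"
  shows "(\<Sum>i\<in>UNIV. \<bar>f i\<bar>)^2 \<le> NN TYPE('n) * (\<Sum>i\<in>UNIV. (f i)^2)"
  using sum_squared_le_sum_of_squares[of "\<lambda>i. \<bar>f i\<bar>" UNIV] by (simp add: mult.commute)


lemma comp_est:
  fixes A :: "'n::finite \<Rightarrow> 'n \<Rightarrow> real"
  assumes adj: "adjacency_matrix A" and tau: "\<tau> \<ge> 0"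
    and X: "\<And>j. 0 \<le> X j" "\<And>j. X j \<le> 1" and Y: "\<And>j. 0 \<le> Y j" "\<And>j. Y j \<le> 1"
  shows "(\<Sum>i\<in>UNIV. 2 * max (X i - Y i) 0 * (nimfa_rhs A \<tau> X i - nimfa_rhs A \<tau> Y i))
         \<le> 2 * \<tau> * NN TYPE('n) * (\<Sum>i\<in>UNIV. (max (X i - Y i) 0)^2)"
proof -
  define P where "P j = max (X j - Y j) 0" for j
  have P0: "P j \<ge> 0" for j unfolding P_def by simp
  have trm: "P i * (nimfa_rhs A \<tau> X i - nimfa_rhs A \<tau> Y i) \<le> \<tau> * P i * (\<Sum>j\<in>UNIV. P j)" for i
  proof -
    have a: "P i * (X i - Y i) \<ge> 0" unfolding P_def by (auto simp: max_def)
    have AD: "(\<Sum>j\<in>UNIV. A i j * (X j - Y j)) \<le> (\<Sum>j\<in>UNIV. A i j * P j)"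
      using adjD[OF adj] by (intro sum_mono mult_left_mono) (auto simp: P_def)
    have AP: "(\<Sum>j\<in>UNIV. A i j * P j) \<le> (\<Sum>j\<in>UNIV. P j)"
      using adjD[OF adj] P0 by (intro sum_mono) (simp add: mult_left_le_one_le)
    have AP0: "0 \<le> (\<Sum>j\<in>UNIV. A i j * P j)" using adjD[OF adj] P0 by (intro sum_nonneg) auto
    have AY: "0 \<le> (\<Sum>j\<in>UNIV. A i j * Y j)" using sumA_bound[OF adj Y] by simp
    have "P i * (1 - X i) * (\<Sum>j\<in>UNIV. A i j * (X j - Y j)) \<le> P i * (1 - X i) * (\<Sum>j\<in>UNIV. A i j * P j)"
      using AD P0[of i] X[of i] by (intro mult_left_mono) auto
    also have "\<dots> \<le> P i * 1 * (\<Sum>j\<in>UNIV. A i j * P j)"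
      using P0[of i] X[of i] AP0 by (intro mult_right_mono mult_left_mono) auto
    also have "\<dots> \<le> P i * (\<Sum>j\<in>UNIV. P j)" using AP P0[of i] by (simp add: mult_left_mono)
    finally have b: "P i * (1 - X i) * (\<Sum>j\<in>UNIV. A i j * (X j - Y j)) \<le> P i * (\<Sum>j\<in>UNIV. P j)" .
    have c: "P i * (X i - Y i) * (\<Sum>j\<in>UNIV. A i j * Y j) \<ge> 0" using a AY by simp
    have "P i * (nimfa_rhs A \<tau> X i - nimfa_rhs A \<tau> Y i) = - (P i * (X i - Y i))
       + \<tau> * (P i * (1 - X i) * (\<Sum>j\<in>UNIV. A i j * (X j - Y j)) - P i * (X i - Y i) * (\<Sum>j\<in>UNIV. A i j * Y j))"
      unfolding rhs_diff_ident by (simp add: algebra_simps)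
    also have "\<dots> \<le> \<tau> * (P i * (\<Sum>j\<in>UNIV. P j))"
      using a b c tau by (smt (verit, ccfv_SIG) mult_left_mono)
    finally show ?thesis by (simp add: mult.assoc)
  qed
  have "(\<Sum>i\<in>UNIV. 2 * P i * (nimfa_rhs A \<tau> X i - nimfa_rhs A \<tau> Y i)) \<le> (\<Sum>i\<in>UNIV. 2 * (\<tau> * P i * (\<Sum>j\<in>UNIV. P j)))"
    using trm by (intro sum_mono) (simp add: mult.assoc)
  also have "\<dots> = 2 * \<tau> * (\<Sum>j\<in>UNIV. \<bar>P j\<bar>)^2"
    using P0 by (simp add: sum_distrib_left[symmetric] sum_distrib_right[symmetric] power2_eq_square algebra_simps)
  also have "\<dots> \<le> 2 * \<tau> * (NN TYPE('n) * (\<Sum>i\<in>UNIV. (P i)^2))"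
    using tau by (intro mult_left_mono cs_abs) auto
  finally show ?thesis unfolding P_def by (simp add: algebra_simps)
qed

lemma uniq_est:
  fixes A :: "'n::finite \<Rightarrow> 'n \<Rightarrow> real"
  assumes adj: "adjacency_matrix A" and tau: "\<tau> \<ge> 0"
    and V: "\<And>j. \<bar>1 - V j\<bar> \<le> B" and W: "\<And>j. 0 \<le> W j" "\<And>j. W j \<le> 1"
  shows "(\<Sum>i\<in>UNIV. 2 * (V i - W i) * (nimfa_rhs A \<tau> V i - nimfa_rhs A \<tau> W i))
         \<le> 2 * \<tau> * B * NN TYPE('n) * (\<Sum>i\<in>UNIV. (V i - W i)^2)"
proof -
  define D where "D j = V j - W j" for j
  have B0: "B \<ge> 0" using V[of undefined] by linarith
  have trm: "D i * (nimfa_rhs A \<tau> V i - nimfa_rhs A \<tau> W i) \<le> \<tau> * B * (\<bar>D i\<bar> * (\<Sum>j\<in>UNIV. \<bar>D j\<bar>))" for i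
  proof -
    have AW: "0 \<le> (\<Sum>j\<in>UNIV. A i j * W j)" using sumA_bound[OF adj W] by simp
    have AD: "\<bar>\<Sum>j\<in>UNIV. A i j * D j\<bar> \<le> (\<Sum>j\<in>UNIV. \<bar>D j\<bar>)" by (rule sumA_diff[OF adj])
    have "\<bar>D i * (1 - V i) * (\<Sum>j\<in>UNIV. A i j * D j)\<bar> = \<bar>D i\<bar> * \<bar>1 - V i\<bar> * \<bar>\<Sum>j\<in>UNIV. A i j * D j\<bar>"
      by (simp add: abs_mult)
    also have "\<dots> \<le> \<bar>D i\<bar> * B * (\<Sum>j\<in>UNIV. \<bar>D j\<bar>)"
      using V[of i] AD B0 by (intro mult_mono mult_left_mono) auto
    finally have b: "D i * (1 - V i) * (\<Sum>j\<in>UNIV. A i j * D j) \<le> B * (\<bar>D i\<bar> * (\<Sum>j\<in>UNIV. \<bar>D j\<bar>))"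
      by (simp add: algebra_simps)
    have c: "D i * D i * (\<Sum>j\<in>UNIV. A i j * W j) \<ge> 0" using AW by simp
    have "D i * (nimfa_rhs A \<tau> V i - nimfa_rhs A \<tau> W i) = - (D i * D i)
       + \<tau> * (D i * (1 - V i) * (\<Sum>j\<in>UNIV. A i j * D j) - D i * D i * (\<Sum>j\<in>UNIV. A i j * W j))"
      unfolding rhs_diff_ident D_def by (simp add: algebra_simps)
    also have "\<dots> \<le> \<tau> * (B * (\<bar>D i\<bar> * (\<Sum>j\<in>UNIV. \<bar>D j\<bar>)))"
      using b c tau by (smt (verit, ccfv_SIG) mult_left_mono zero_le_square)
    finally show ?thesis by (simp add: mult.assoc)
  qed
  have "(\<Sum>i\<in>UNIV. 2 * D i * (nimfa_rhs A \<tau> V i - nimfa_rhs A \<tau> W i)) \<le> (\<Sum>i\<in>UNIV. 2 * (\<tau> * B * (\<bar>D i\<bar> * (\<Sum>j\<in>UNIV. \<bar>D j\<bar>))))"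
    using trm by (intro sum_mono) (simp add: mult.assoc)
  also have "\<dots> = 2 * \<tau> * B * (\<Sum>j\<in>UNIV. \<bar>D j\<bar>)^2"
    by (simp add: sum_distrib_left[symmetric] sum_distrib_right[symmetric] power2_eq_square algebra_simps)
  also have "\<dots> \<le> 2 * \<tau> * B * (NN TYPE('n) * (\<Sum>i\<in>UNIV. (D i)^2))"
    using tau B0 by (intro mult_left_mono cs_abs) auto
  finally show ?thesis unfolding D_def by (simp add: algebra_simps)
qed


lemma cont_from_der:
  fixes f :: "real \<Rightarrow> real"
  assumes "\<And>s. 0 \<le> s \<Longrightarrow> (f has_real_derivative d s) (at s within {0..})"
  shows "continuous_on {0..T} f"
proof -
  have "continuous (at s within {0..T}) f" if "s \<in> {0..T}" for s
  proof -
    have "continuous (at s within {0..}) f" using assms[of s] that by (intro DERIV_continuous) auto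
    then show ?thesis by (rule continuous_within_subset) auto
  qed
  then show ?thesis by (simp add: continuous_on_eq_continuous_within)
qed

lemma sum_sq_le0:
  fixes f :: "'n::finite \<Rightarrow> real"
  assumes "(\<Sum>i\<in>UNIV. (f i)^2) \<le> 0" shows "f i = 0"
proof -
  have "(f i)^2 \<le> (\<Sum>i\<in>UNIV. (f i)^2)" by (rule member_le_sum) auto
  with assms have "(f i)^2 \<le> 0" by linarith
  then show ?thesis by simp
qed

lemma grhs_invariant:
  fixes A :: "'n::finite \<Rightarrow> 'n \<Rightarrow> real"
  assumes adj: "adjacency_matrix A" and tau: "\<tau> \<ge> 0"
    and der: "\<And>t i. 0 \<le> t \<Longrightarrow> ((\<lambda>s. X s i) has_real_derivative grhs A \<tau> (X t) i) (at t within {0..})"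
    and init: "\<And>i. 0 \<le> X 0 i" "\<And>i. X 0 i \<le> 1" and t: "0 \<le> t"
  shows "0 \<le> X t i \<and> X t i \<le> 1"
proof
  let ?\<phi> = "\<lambda>s. \<Sum>i\<in>UNIV. (max (- X s i) 0)^2"
  have "?\<phi> t \<le> 0"
  proof (rule gronwall0[where C=0 and T=t and \<phi>="?\<phi>"])
    fix s :: real assume s: "0 \<le> s" "s \<le> t"
    show "(?\<phi> has_real_derivative (\<Sum>i\<in>UNIV. 2 * max (- X s i) 0 * (- grhs A \<tau> (X s) i))) (at s within {0..})"
      by (intro DERIV_sum maxsq_chain DERIV_minus der s)
    have "2 * max (- X s i) 0 * (- grhs A \<tau> (X s) i) \<le> 0" for i
    proof (cases "X s i < 0")
      case True
      then have "clampv (X s) i = 0" unfolding clampv_def by auto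
      then have "grhs A \<tau> (X s) i \<ge> 0" unfolding grhs_def nimfa_rhs_def
        using sumA_bound[OF adj, of "clampv (X s)" i] tau by (simp add: clamp_bounds)
      then show ?thesis using True by (simp add: mult_nonpos_nonneg)
    qed auto
    then show "(\<Sum>i\<in>UNIV. 2 * max (- X s i) 0 * (- grhs A \<tau> (X s) i)) \<le> 0 * ?\<phi> s"
      by (simp add: sum_nonpos)
  qed (use init t in auto)
  then have "max (- X t i) 0 = 0" by (rule sum_sq_le0)
  then show "0 \<le> X t i" by linarith
next
  let ?\<phi> = "\<lambda>s. \<Sum>i\<in>UNIV. (max (X s i - 1) 0)^2"
  have "?\<phi> t \<le> 0"
  proof (rule gronwall0[where C=0 and T=t and \<phi>="?\<phi>"])
    fix s :: real assume s: "0 \<le> s" "s \<le> t"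
    show "(?\<phi> has_real_derivative (\<Sum>i\<in>UNIV. 2 * max (X s i - 1) 0 * (grhs A \<tau> (X s) i - 0))) (at s within {0..})"
      by (intro DERIV_sum maxsq_chain DERIV_diff DERIV_const der s)
    have "2 * max (X s i - 1) 0 * (grhs A \<tau> (X s) i - 0) \<le> 0" for i
    proof (cases "X s i > 1")
      case True
      then have "clampv (X s) i = 1" unfolding clampv_def by auto
      then have "grhs A \<tau> (X s) i = -1" unfolding grhs_def nimfa_rhs_def by simp
      then show ?thesis using True by simp
    qed auto
    then show "(\<Sum>i\<in>UNIV. 2 * max (X s i - 1) 0 * (grhs A \<tau> (X s) i - 0)) \<le> 0 * ?\<phi> s"
      by (simp add: sum_nonpos)
  qed (use init t in auto)
  then have "max (X t i - 1) 0 = 0" by (rule sum_sq_le0)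
  then show "X t i \<le> 1" by linarith
qed

lemma exists_sol:
  fixes A :: "'n::finite \<Rightarrow> 'n \<Rightarrow> real"
  assumes adj: "adjacency_matrix A" and tau: "\<tau> \<ge> 0"
    and x0: "\<And>i. 0 \<le> x0 i" "\<And>i. x0 i \<le> 1"
  shows "\<exists>V. nimfa_solution A \<tau> V \<and> V 0 = x0 \<and> (\<forall>t\<ge>0. \<forall>i. 0 \<le> V t i \<and> V t i \<le> 1)"
proof (intro exI conjI)
  let ?X = "Xlim A \<tau> x0"
  have der: "\<And>t i. 0 \<le> t \<Longrightarrow> ((\<lambda>s. ?X s i) has_real_derivative grhs A \<tau> (?X t) i) (at t within {0..})"
    by (rule Xder[OF adj tau])
  have X0: "?X 0 = x0" by (rule X0[OF adj tau])
  show inv: "\<forall>t\<ge>0. \<forall>i. 0 \<le> ?X t i \<and> ?X t i \<le> 1"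
    using grhs_invariant[OF adj tau der] x0 X0 by auto
  show "?X 0 = x0" by (rule X0)
  show "nimfa_solution A \<tau> ?X"
    unfolding nimfa_solution_def
  proof (intro allI impI)
    fix t :: real and i assume t: "0 \<le> t"
    have "clampv (?X t) = ?X t" using inv t unfolding clampv_def by (auto simp: fun_eq_iff)
    then show "((\<lambda>s. ?X s i) has_real_derivative nimfa_rhs A \<tau> (?X t) i) (at t within {0..})"
      using der[OF t, of i] unfolding grhs_def by simp
  qed
qed


lemma uniqueness:
  fixes A :: "'n::finite \<Rightarrow> 'n \<Rightarrow> real"
  assumes adj: "adjacency_matrix A" and tau: "\<tau> \<ge> 0"
    and V: "nimfa_solution A \<tau> V" and W: "nimfa_solution A \<tau> W"
    and Wb: "\<And>t i. 0 \<le> t \<Longrightarrow> 0 \<le> W t i \<and> W t i \<le> 1"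
    and init: "V 0 = W 0" and t: "0 \<le> t"
  shows "V t = W t"
proof -
  have Vd: "\<And>s i. 0 \<le> s \<Longrightarrow> ((\<lambda>s. V s i) has_real_derivative nimfa_rhs A \<tau> (V s) i) (at s within {0..})"
    using V unfolding nimfa_solution_def by blast
  have Wd: "\<And>s i. 0 \<le> s \<Longrightarrow> ((\<lambda>s. W s i) has_real_derivative nimfa_rhs A \<tau> (W s) i) (at s within {0..})"
    using W unfolding nimfa_solution_def by blast
  have "\<exists>b. \<forall>s\<in>{0..t}. \<bar>V s i\<bar> \<le> b" for i
  proof -
    have "compact ((\<lambda>s. V s i) ` {0..t})"
      by (intro compact_continuous_image cont_from_der[OF Vd]) auto
    then show ?thesis using compact_imp_bounded bounded_real by fastforce
  qed
  then obtain bf where bf: "\<And>i s. s \<in> {0..t} \<Longrightarrow> \<bar>V s i\<bar> \<le> bf i" by metis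
  define B where "B = 1 + (\<Sum>i\<in>UNIV. \<bar>bf i\<bar>)"
  have Bb: "\<bar>1 - V s j\<bar> \<le> B" if "s \<in> {0..t}" for s j
  proof -
    have "\<bar>bf j\<bar> \<le> (\<Sum>i\<in>UNIV. \<bar>bf i\<bar>)" by (rule member_le_sum) auto
    then show ?thesis using bf[OF that, of j] unfolding B_def by linarith
  qed
  have B0: "B \<ge> 0" unfolding B_def by (simp add: sum_nonneg add_nonneg_nonneg)
  let ?\<phi> = "\<lambda>s. \<Sum>i\<in>UNIV. (V s i - W s i)^2"
  have "?\<phi> t \<le> 0"
  proof (rule gronwall0[where C="2 * \<tau> * B * NN TYPE('n)" and T=t and \<phi>="?\<phi>"])
    fix s :: real assume s: "0 \<le> s" "s \<le> t"
    show "(?\<phi> has_real_derivative (\<Sum>i\<in>UNIV. 2 * (V s i - W s i) * (nimfa_rhs A \<tau> (V s) i - nimfa_rhs A \<tau> (W s) i))) (at s within {0..})"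
    proof (intro DERIV_sum)
      fix i :: 'n
      have "((\<lambda>s. V s i - W s i) has_real_derivative (nimfa_rhs A \<tau> (V s) i - nimfa_rhs A \<tau> (W s) i)) (at s within {0..})"
        by (intro DERIV_diff Vd Wd s)
      from DERIV_pow[THEN DERIV_chain2, OF this, of 2]
      show "((\<lambda>s. (V s i - W s i)^2) has_real_derivative 2 * (V s i - W s i) * (nimfa_rhs A \<tau> (V s) i - nimfa_rhs A \<tau> (W s) i)) (at s within {0..})"
        by simp
    qed
    show "(\<Sum>i\<in>UNIV. 2 * (V s i - W s i) * (nimfa_rhs A \<tau> (V s) i - nimfa_rhs A \<tau> (W s) i)) \<le> 2 * \<tau> * B * NN TYPE('n) * ?\<phi> s"
      by (rule uniq_est[OF adj tau]) (use Bb s Wb in auto)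
  qed (use init t in auto)
  then have "V t i - W t i = 0" for i by (rule sum_sq_le0)
  then show ?thesis by (auto simp: fun_eq_iff)
qed

lemma comparison:
  fixes A :: "'n::finite \<Rightarrow> 'n \<Rightarrow> real"
  assumes adj: "adjacency_matrix A" and tau: "\<tau> \<ge> 0"
    and Xd: "\<And>s i. 0 \<le> s \<Longrightarrow> ((\<lambda>s. X s i) has_real_derivative dX s i) (at s within {0..})"
    and Yd: "\<And>s i. 0 \<le> s \<Longrightarrow> ((\<lambda>s. Y s i) has_real_derivative dY s i) (at s within {0..})"
    and Xb: "\<And>s i. 0 \<le> s \<Longrightarrow> 0 \<le> X s i \<and> X s i \<le> 1"
    and Yb: "\<And>s i. 0 \<le> s \<Longrightarrow> 0 \<le> Y s i \<and> Y s i \<le> 1"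
    and Xsub: "\<And>s i. 0 \<le> s \<Longrightarrow> dX s i \<le> nimfa_rhs A \<tau> (X s) i"
    and Ysup: "\<And>s i. 0 \<le> s \<Longrightarrow> nimfa_rhs A \<tau> (Y s) i \<le> dY s i"
    and init: "\<And>i. X 0 i \<le> Y 0 i" and t: "0 \<le> t"
  shows "X t i \<le> Y t i"
proof -
  let ?\<phi> = "\<lambda>s. \<Sum>i\<in>UNIV. (max (X s i - Y s i) 0)^2"
  have "?\<phi> t \<le> 0"
  proof (rule gronwall0[where C="2 * \<tau> * NN TYPE('n)" and T=t and \<phi>="?\<phi>"])
    fix s :: real assume s: "0 \<le> s" "s \<le> t"
    show "(?\<phi> has_real_derivative (\<Sum>i\<in>UNIV. 2 * max (X s i - Y s i) 0 * (dX s i - dY s i))) (at s within {0..})"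
      by (intro DERIV_sum maxsq_chain DERIV_diff Xd Yd s)
    have "(\<Sum>i\<in>UNIV. 2 * max (X s i - Y s i) 0 * (dX s i - dY s i))
        \<le> (\<Sum>i\<in>UNIV. 2 * max (X s i - Y s i) 0 * (nimfa_rhs A \<tau> (X s) i - nimfa_rhs A \<tau> (Y s) i))"
    proof (intro sum_mono)
      fix i
      have "dX s i - dY s i \<le> nimfa_rhs A \<tau> (X s) i - nimfa_rhs A \<tau> (Y s) i"
        using Xsub[of s i] Ysup[of s i] s by linarith
      then show "2 * max (X s i - Y s i) 0 * (dX s i - dY s i) \<le> 2 * max (X s i - Y s i) 0 * (nimfa_rhs A \<tau> (X s) i - nimfa_rhs A \<tau> (Y s) i)"
        by (intro mult_left_mono) auto
    qed
    also have "\<dots> \<le> 2 * \<tau> * NN TYPE('n) * ?\<phi> s"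
      by (rule comp_est[OF adj tau]) (use Xb Yb s in auto)
    finally show "(\<Sum>i\<in>UNIV. 2 * max (X s i - Y s i) 0 * (dX s i - dY s i)) \<le> 2 * \<tau> * NN TYPE('n) * ?\<phi> s" .
  qed (use init t in \<open>auto intro!: sum_nonpos simp: max_def\<close>)
  then have "max (X t i - Y t i) 0 = 0" by (rule sum_sq_le0)
  then show ?thesis by linarith
qed


definition Ax :: "('n::finite \<Rightarrow> 'n \<Rightarrow> real) \<Rightarrow> ('n \<Rightarrow> real) \<Rightarrow> 'n \<Rightarrow> real" where
  "Ax A x i = (\<Sum>j\<in>UNIV. A i j * x j)"
definition qf :: "('n::finite \<Rightarrow> 'n \<Rightarrow> real) \<Rightarrow> ('n \<Rightarrow> real) \<Rightarrow> real" where
  "qf A x = (\<Sum>i\<in>UNIV. x i * Ax A x i)"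
definition ss :: "('n::finite \<Rightarrow> real) \<Rightarrow> real" where
  "ss x = (\<Sum>i\<in>UNIV. (x i)^2)"

lemma sym_bil:
  fixes A :: "'n::finite \<Rightarrow> 'n \<Rightarrow> real"
  assumes sym: "\<And>i j. A i j = A j i"
  shows "(\<Sum>i\<in>UNIV. x i * Ax A w i) = (\<Sum>i\<in>UNIV. w i * Ax A x i)"
proof -
  have "(\<Sum>i\<in>UNIV. x i * Ax A w i) = (\<Sum>i\<in>UNIV. \<Sum>j\<in>UNIV. x i * A i j * w j)"
    unfolding Ax_def by (simp add: sum_distrib_left mult.assoc)
  also have "\<dots> = (\<Sum>j\<in>UNIV. \<Sum>i\<in>UNIV. x i * A i j * w j)" by (rule sum.swap)
  also have "\<dots> = (\<Sum>j\<in>UNIV. w j * Ax A x j)"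
    unfolding Ax_def by (simp add: sum_distrib_left sym mult.commute mult.left_commute)
  finally show ?thesis .
qed

lemma Ax_lin: "Ax A (\<lambda>i. x i + s * w i) i = Ax A x i + s * Ax A w i"
  unfolding Ax_def by (simp add: sum.distrib sum_distrib_left algebra_simps)

lemma q_expand:
  fixes A :: "'n::finite \<Rightarrow> 'n \<Rightarrow> real"
  assumes sym: "\<And>i j. A i j = A j i"
  shows "qf A (\<lambda>i. x i + s * w i) = qf A x + 2 * s * (\<Sum>i\<in>UNIV. w i * Ax A x i) + s^2 * qf A w"
proof -
  have "qf A (\<lambda>i. x i + s * w i) = (\<Sum>i\<in>UNIV. x i * Ax A x i) + s * (\<Sum>i\<in>UNIV. x i * Ax A w i)
      + s * (\<Sum>i\<in>UNIV. w i * Ax A x i) + s^2 * (\<Sum>i\<in>UNIV. w i * Ax A w i)"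
    unfolding qf_def Ax_lin by (simp add: sum.distrib sum_distrib_left algebra_simps power2_eq_square)
  then show ?thesis unfolding sym_bil[OF sym, where x=x and w=w] qf_def by simp
qed

lemma ss_expand: "ss (\<lambda>i. x i + s * w i) = ss x + 2 * s * (\<Sum>i\<in>UNIV. w i * x i) + s^2 * ss w"
  unfolding ss_def by (simp add: sum.distrib sum_distrib_left algebra_simps power2_eq_square)

lemma max_eigvec:
  fixes A :: "'n::finite \<Rightarrow> 'n \<Rightarrow> real"
  assumes sym: "\<And>i j. A i j = A j i"
    and le: "\<And>y. qf A y \<le> \<mu> * ss y" and eq: "qf A x = \<mu> * ss x"
  shows "Ax A x i = \<mu> * x i"
proof -
  define w where "w i = Ax A x i - \<mu> * x i" for i
  define W where "W = ss w"
  define c where "c = qf A w - \<mu> * ss w"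
  have key: "2 * s * W + s^2 * c \<le> 0" for s
  proof -
    define P where "P = (\<Sum>i\<in>UNIV. w i * Ax A x i)"
    define Q where "Q = (\<Sum>i\<in>UNIV. w i * x i)"
    have h: "qf A x + 2 * s * P + s^2 * qf A w \<le> \<mu> * (ss x + 2 * s * Q + s^2 * ss w)"
      using le[of "\<lambda>i. x i + s * w i"] unfolding q_expand[OF sym] ss_expand P_def Q_def .
    have PQ: "P - \<mu> * Q = W"
      unfolding W_def ss_def w_def P_def Q_def by (simp add: sum_distrib_left sum_subtractf[symmetric] power2_eq_square algebra_simps)
    have "2 * s * W + s^2 * c = (qf A x + 2 * s * P + s^2 * qf A w) - \<mu> * (ss x + 2 * s * Q + s^2 * ss w) + (\<mu> * ss x - qf A x)"
      unfolding c_def PQ[symmetric] by (simp add: algebra_simps)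
    then show ?thesis using h eq by linarith
  qed
  have W0: "W \<ge> 0" unfolding W_def ss_def by (simp add: sum_nonneg)
  have "W \<le> 0"
  proof (rule ccontr)
    assume "\<not> W \<le> 0"
    then have Wp: "W > 0" by simp
    define s where "s = W / (\<bar>c\<bar> + 1)"
    have sp: "s > 0" unfolding s_def using Wp by simp
    have "s * \<bar>c\<bar> < W" unfolding s_def using Wp by (simp add: field_simps)
    then have b: "s * (s * \<bar>c\<bar>) < s * W" using sp by (rule mult_strict_left_mono)
    have "s^2 * (- \<bar>c\<bar>) \<le> s^2 * c" by (rule mult_left_mono) auto
    then have a: "- (s * (s * \<bar>c\<bar>)) \<le> s^2 * c" by (simp add: power2_eq_square)
    have "s * W > 0" using sp Wp by simp
    then have "2 * s * W + s^2 * c > 0" using a b by linarith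
    with key[of s] show False by simp
  qed
  then have "ss w = 0" using W0 unfolding W_def by simp
  then have "(w i)^2 \<le> 0" unfolding ss_def using member_le_sum[of i UNIV "\<lambda>i. (w i)^2"] by simp
  then show ?thesis unfolding w_def by simp
qed


lemma norm_vec_sq: "(norm (v::real^'n))^2 = (\<Sum>i\<in>UNIV. (v$i)^2)"
  unfolding norm_vec_def L2_set_def by (simp add: sum_nonneg)

lemma qf_scale: "qf A (\<lambda>i. a * y i) = a^2 * qf A y"
  unfolding qf_def Ax_def by (simp add: sum_distrib_left power2_eq_square algebra_simps)

lemma ss_scale: "ss (\<lambda>i. a * y i) = a^2 * ss y"
  unfolding ss_def by (simp add: sum_distrib_left power2_eq_square algebra_simps)

lemma ss_nonneg: "ss y \<ge> 0" unfolding ss_def by (simp add: sum_nonneg)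

lemma ss_zero: "ss y = 0 \<Longrightarrow> y i = 0"
proof -
  assume "ss y = 0"
  then have "(y i)^2 \<le> 0" unfolding ss_def using member_le_sum[of i UNIV "\<lambda>i. (y i)^2"] by simp
  then show ?thesis by simp
qed

lemma qf_cont: "continuous_on S (\<lambda>v::real^'n. qf A (\<lambda>i. v$i))"
  unfolding qf_def Ax_def by (intro continuous_intros)

lemma sphere_max:
  fixes A :: "'n::finite \<Rightarrow> 'n \<Rightarrow> real"
  shows "\<exists>x. ss x = 1 \<and> (\<forall>y. ss y = 1 \<longrightarrow> qf A y \<le> qf A x)"
proof -
  obtain v0 :: "real^'n" where v0: "v0 \<in> sphere 0 1" and mx: "\<forall>v\<in>sphere 0 1. qf A (\<lambda>i. v$i) \<le> qf A (\<lambda>i. v0$i)"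
    using continuous_attains_sup[OF compact_sphere _ qf_cont, of 0 1 A] by auto
  show ?thesis
  proof (intro exI conjI allI impI)
    show "ss (\<lambda>i. v0$i) = 1" using v0 norm_vec_sq[of v0] unfolding ss_def by simp
    fix y :: "'n \<Rightarrow> real" assume y: "ss y = 1"
    have "(\<chi> i. y i) \<in> sphere (0::real^'n) 1"
      using y norm_vec_sq[of "\<chi> i. y i"] unfolding ss_def by (simp add: power2_eq_1_iff)
         (smt (verit) norm_ge_zero)
    from mx[rule_format, OF this] show "qf A y \<le> qf A (\<lambda>i. v0$i)" by (simp add: vec_lambda_inverse)
  qed
qed

lemma ray_bound:
  fixes A :: "'n::finite \<Rightarrow> 'n \<Rightarrow> real"
  obtains x where "ss x = 1" "\<And>y. qf A y \<le> qf A x * ss y"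
proof -
  obtain x where x: "ss x = 1" and mx: "\<And>y. ss y = 1 \<Longrightarrow> qf A y \<le> qf A x"
    using sphere_max[of A] by blast
  have "qf A y \<le> qf A x * ss y" for y
  proof (cases "ss y = 0")
    case True
    then have "y = (\<lambda>i. 0)" using ss_zero by blast
    then show ?thesis unfolding qf_def ss_def by simp
  next
    case False
    then have sp: "ss y > 0" using ss_nonneg[of y] by simp
    define c where "c = sqrt (ss y)"
    have cp: "c > 0" "c^2 = ss y" unfolding c_def using sp by auto
    have "ss (\<lambda>i. (1/c) * y i) = 1" unfolding ss_scale using cp sp by (simp add: power_divide)
    then have "qf A (\<lambda>i. (1/c) * y i) \<le> qf A x" by (rule mx)
    then have "qf A y / c^2 \<le> qf A x" unfolding qf_scale by (simp add: power_divide)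
    then show ?thesis using cp sp by (simp add: divide_le_eq mult.commute)
  qed
  then show thesis using that x by blast
qed

lemma adj_sym_nonneg:
  assumes "adjacency_matrix A" shows "\<And>i j. A i j = A j i" "\<And>i j. 0 \<le> A i j"
  using assms unfolding adjacency_matrix_def by (metis, metis order.refl zero_le_one)

lemma eig_facts:
  fixes A :: "'n::finite \<Rightarrow> 'n \<Rightarrow> real"
  assumes adj: "adjacency_matrix A"
  shows "(\<forall>y. qf A y \<le> lambda1 A * ss y) \<and> (\<exists>x. (\<forall>i. 0 \<le> x i) \<and> ss x = 1 \<and> (\<forall>i. Ax A x i = lambda1 A * x i))"
proof -
  note sym = adj_sym_nonneg(1)[OF adj] and nn = adj_sym_nonneg(2)[OF adj]
  obtain x where x: "ss x = 1" and le: "\<And>y. qf A y \<le> qf A x * ss y" using ray_bound by blast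
  define \<mu> where "\<mu> = qf A x"
  define ax where "ax i = \<bar>x i\<bar>" for i
  have ssax: "ss ax = 1" using x unfolding ss_def ax_def by simp
  have "qf A x \<le> qf A ax"
  proof -
    have "qf A x = (\<Sum>i\<in>UNIV. \<Sum>j\<in>UNIV. x i * A i j * x j)"
      unfolding qf_def Ax_def by (simp add: sum_distrib_left mult.assoc)
    also have "\<dots> \<le> (\<Sum>i\<in>UNIV. \<Sum>j\<in>UNIV. ax i * A i j * ax j)"
    proof (intro sum_mono)
      fix i j
      have "x i * A i j * x j \<le> \<bar>x i * A i j * x j\<bar>" by simp
      also have "\<dots> = ax i * A i j * ax j" unfolding ax_def using nn[of i j] by (simp add: abs_mult)
      finally show "x i * A i j * x j \<le> ax i * A i j * ax j" .
    qed
    also have "\<dots> = qf A ax"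
      unfolding qf_def Ax_def by (simp add: sum_distrib_left mult.assoc)
    finally show ?thesis .
  qed
  moreover have "qf A ax \<le> \<mu> * ss ax" using le[of ax] unfolding \<mu>_def by simp
  ultimately have eqax: "qf A ax = \<mu> * ss ax" using ssax unfolding \<mu>_def by simp
  have le': "\<And>y. qf A y \<le> \<mu> * ss y" using le unfolding \<mu>_def by (simp add: mult.commute)
  have eigax: "Ax A ax i = \<mu> * ax i" for i by (rule max_eigvec[OF sym le' eqax])
  have ax0: "ax \<noteq> (\<lambda>_. 0)" using ssax unfolding ss_def by auto
  have mu_eig: "is_eigenvalue A \<mu>" unfolding is_eigenvalue_def using ax0 eigax unfolding Ax_def by blast
  have eig_le: "l \<le> \<mu>" if el: "is_eigenvalue A l" for l
  proof -
    obtain v where v: "v \<noteq> (\<lambda>_. 0)" "\<And>i. Ax A v i = l * v i" using el unfolding is_eigenvalue_def Ax_def by blast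
    have "qf A v = l * ss v" unfolding qf_def ss_def v(2) by (simp add: sum_distrib_left power2_eq_square algebra_simps)
    moreover have "ss v > 0"
    proof -
      have "ss v \<noteq> 0" using v(1) ss_zero by blast
      then show ?thesis using ss_nonneg[of v] by simp
    qed
    ultimately show ?thesis using le'[of v] by simp
  qed
  define E where "E = {l. is_eigenvalue A l}"
  define ev where "ev l = (SOME v. v \<noteq> (\<lambda>_. 0) \<and> (\<forall>i. Ax A v i = l * v i))" for l
  have ev: "ev l \<noteq> (\<lambda>_. 0) \<and> (\<forall>i. Ax A (ev l) i = l * ev l i)" if "l \<in> E" for l
  proof -
    have "\<exists>v. v \<noteq> (\<lambda>_. 0) \<and> (\<forall>i. Ax A v i = l * v i)" using that unfolding E_def is_eigenvalue_def Ax_def by blast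
    then show ?thesis unfolding ev_def by (rule someI_ex)
  qed
  have orth: "(\<Sum>i\<in>UNIV. ev l i * ev m i) = 0" if "l \<in> E" "m \<in> E" "l \<noteq> m" for l m
  proof -
    have "l * (\<Sum>i\<in>UNIV. ev l i * ev m i) = (\<Sum>i\<in>UNIV. ev m i * Ax A (ev l) i)"
      using ev[OF that(1)] by (simp add: sum_distrib_left algebra_simps)
    also have "\<dots> = (\<Sum>i\<in>UNIV. ev l i * Ax A (ev m) i)" by (rule sym_bil[OF sym, symmetric])
    also have "\<dots> = m * (\<Sum>i\<in>UNIV. ev l i * ev m i)"
      using ev[OF that(2)] by (simp add: sum_distrib_left algebra_simps)
    finally show ?thesis using that(3) by simp
  qed
  define evv where "evv l = (\<chi> i. ev l i)" for l
  have evv_inner: "evv l \<bullet> evv m = (\<Sum>i\<in>UNIV. ev l i * ev m i)" for l m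
    unfolding evv_def inner_vec_def by simp
  have evv0: "evv l \<noteq> 0" if "l \<in> E" for l
  proof
    assume "evv l = 0"
    then have "ev l i = 0" for i unfolding evv_def by (metis vec_lambda_beta zero_index)
    with ev[OF that] show False by auto
  qed
  have inj: "inj_on evv E"
  proof (rule inj_onI, rule ccontr)
    fix l m assume lm: "l \<in> E" "m \<in> E" "evv l = evv m" "l \<noteq> m"
    then have "evv l \<bullet> evv l = 0" using orth evv_inner by metis
    with evv0[OF lm(1)] show False by simp
  qed
  have "pairwise orthogonal (evv ` E)"
    unfolding pairwise_def orthogonal_def using orth evv_inner by fastforce
  moreover have "0 \<notin> evv ` E" using evv0 by auto
  ultimately have "independent (evv ` E)" by (rule pairwise_orthogonal_independent)
  then have "finite (evv ` E)" by (rule independent_imp_finite)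
  then have finE: "finite E" using inj by (rule finite_imageD)
  have "lambda1 A = \<mu>" unfolding lambda1_def
    by (rule Max_eqI) (use finE mu_eig eig_le in \<open>auto simp: E_def\<close>)
  then show ?thesis using le' eigax ssax unfolding ax_def by (intro conjI exI[of _ "\<lambda>i. \<bar>x i\<bar>"]) auto
qed


lemma shift_sol:
  assumes V: "nimfa_solution A \<tau> V" and h: "h \<ge> 0"
  shows "nimfa_solution A \<tau> (\<lambda>s. V (s + h))"
  unfolding nimfa_solution_def
proof (intro allI impI)
  fix t :: real and i assume t: "0 \<le> t"
  have Vd: "\<And>s i. 0 \<le> s \<Longrightarrow> ((\<lambda>s. V s i) has_real_derivative nimfa_rhs A \<tau> (V s) i) (at s within {0..})"
    using V unfolding nimfa_solution_def by blast
  show "((\<lambda>s. V (s + h) i) has_real_derivative nimfa_rhs A \<tau> (V (t + h)) i) (at t within {0..})"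
  proof (cases "t + h > 0")
    case True
    have d1: "((\<lambda>s. V s i) has_real_derivative nimfa_rhs A \<tau> (V (t + h)) i) (at (t + h))"
      using Vd[of "t+h" i] True by (intro deriv_within_pos) auto
    have d2: "((\<lambda>s. s + h) has_real_derivative 1) (at t within {0..})"
      by (auto intro!: derivative_eq_intros)
    from DERIV_chain2[OF d1 d2] show ?thesis by simp
  next
    case False
    then have "h = 0" "t = 0" using h t by auto
    then show ?thesis using Vd[of 0 i] by simp
  qed
qed

lemma sol_deriv:
  "nimfa_solution A \<tau> V \<Longrightarrow> 0 \<le> s \<Longrightarrow> ((\<lambda>s. V s i) has_real_derivative nimfa_rhs A \<tau> (V s) i) (at s within {0..})"
  unfolding nimfa_solution_def by blast

lemma eq_pos:
  fixes A :: "'n::finite \<Rightarrow> 'n \<Rightarrow> real"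
  assumes adj: "adjacency_matrix A" and conn: "connected_graph A" and tau: "\<tau> > 0"
    and v0: "\<And>j. 0 \<le> v j" and eqv: "\<And>j. nimfa_rhs A \<tau> v j = 0" and vk: "v k > 0"
  shows "v j > 0"
proof -
  have "(\<lambda>x y. A x y = 1)\<^sup>*\<^sup>* k j" using conn unfolding connected_graph_def by blast
  then show ?thesis
  proof (induction rule: rtranclp_induct)
    case base then show ?case using vk .
  next
    case (step y z)
    have Azy: "A z y = 1" using step(2) adjD(3)[OF adj] by simp
    have "A z y * v y \<le> (\<Sum>j\<in>UNIV. A z j * v j)"
      by (rule member_le_sum[where f="\<lambda>j. A z j * v j"]) (use adjD(1)[OF adj] v0 in auto)
    then have S: "(\<Sum>j\<in>UNIV. A z j * v j) > 0" using Azy step(3) by simp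
    show ?case
    proof (rule ccontr)
      assume "\<not> 0 < v z"
      then have "v z = 0" using v0[of z] by simp
      then have "nimfa_rhs A \<tau> v z = \<tau> * (\<Sum>j\<in>UNIV. A z j * v j)" unfolding nimfa_rhs_def by simp
      with S tau eqv[of z] show False by simp
    qed
  qed
qed

lemma eq_ge:
  fixes A :: "'n::finite \<Rightarrow> 'n \<Rightarrow> real"
  assumes adj: "adjacency_matrix A" and tau: "\<tau> > 0"
    and v: "\<And>j. 0 < v j" "\<And>j. v j \<le> 1" "\<And>j. nimfa_rhs A \<tau> v j = 0"
    and w: "\<And>j. 0 < w j" "\<And>j. w j \<le> 1" "\<And>j. nimfa_rhs A \<tau> w j = 0"
  shows "w j \<le> v j"
proof -
  define R where "R = (\<lambda>j. v j / w j) ` UNIV"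
  have finR: "finite R" "R \<noteq> {}" unfolding R_def by auto
  have "Min R \<in> R" by (rule Min_in[OF finR])
  then obtain k where k: "Min R = v k / w k" unfolding R_def by blast
  define \<alpha> where "\<alpha> = v k / w k"
  have amin: "\<alpha> \<le> v j / w j" for j unfolding \<alpha>_def k[symmetric] R_def by (rule Min_le) auto
  have ap: "\<alpha> > 0" unfolding \<alpha>_def using v(1) w(1) by simp
  have vge: "\<alpha> * w j \<le> v j" for j using amin[of j] w(1)[of j] by (simp add: le_divide_eq)
  have vk: "v k = \<alpha> * w k" unfolding \<alpha>_def using w(1)[of k] by simp
  define Sv where "Sv = (\<Sum>j\<in>UNIV. A k j * v j)"
  define Sw where "Sw = (\<Sum>j\<in>UNIV. A k j * w j)"
  have SS: "\<alpha> * Sw \<le> Sv" unfolding Sv_def Sw_def sum_distrib_left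
  proof (intro sum_mono)
    fix j
    have "A k j * (\<alpha> * w j) \<le> A k j * v j" using vge[of j] adjD(1)[OF adj, of k j] by (rule mult_left_mono)
    then show "\<alpha> * (A k j * w j) \<le> A k j * v j" by (simp add: algebra_simps)
  qed
  have ev: "v k = \<tau> * (1 - v k) * Sv" using v(3)[of k] unfolding nimfa_rhs_def Sv_def by simp
  have ew: "w k = \<tau> * (1 - w k) * Sw" using w(3)[of k] unfolding nimfa_rhs_def Sw_def by simp
  have wk1: "w k < 1" using ew w(1)[of k] w(2)[of k] by (cases "w k = 1") auto
  have "\<tau> * (1 - v k) * (\<alpha> * Sw) \<le> \<tau> * (1 - v k) * Sv"
    using SS tau v(2)[of k] by (intro mult_left_mono) auto
  then have "v k \<ge> \<tau> * (1 - v k) * (\<alpha> * Sw)" using ev by linarith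
  then have "v k * (1 - w k) \<ge> \<tau> * (1 - v k) * (\<alpha> * Sw) * (1 - w k)"
    using wk1 by (intro mult_right_mono) auto
  then have "v k * (1 - w k) \<ge> (1 - v k) * \<alpha> * (\<tau> * (1 - w k) * Sw)"
    by (simp add: mult_ac)
  then have "\<alpha> * w k * (1 - w k) \<ge> (1 - \<alpha> * w k) * \<alpha> * w k" unfolding ew[symmetric] vk .
  then have "(\<alpha> * w k) * (1 - w k) \<ge> (\<alpha> * w k) * (1 - \<alpha> * w k)" by (simp add: algebra_simps)
  then have "1 - w k \<ge> 1 - \<alpha> * w k" using ap w(1)[of k] by (simp add: mult_le_cancel_left_pos)
  then have "\<alpha> \<ge> 1" using w(1)[of k] by simp
  then have "1 * w j \<le> \<alpha> * w j" using w(1)[of j] by (intro mult_right_mono) auto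
  then show ?thesis using vge[of j] by simp
qed

lemma limit_eq:
  fixes A :: "'n::finite \<Rightarrow> 'n \<Rightarrow> real"
  assumes V: "nimfa_solution A \<tau> V"
    and lim: "\<And>j. (\<lambda>n. V (real n) j) \<longlonglongrightarrow> l j"
    and btw: "\<And>j n s. real n \<le> s \<Longrightarrow> s \<le> real n + 1 \<Longrightarrow>
                 min (V (real n) j) (V (real n + 1) j) \<le> V s j \<and> V s j \<le> max (V (real n) j) (V (real n + 1) j)"
  shows "nimfa_rhs A \<tau> l i = 0"
proof -
  have "\<exists>z. real (Suc n) < z \<and> z < real (Suc n) + 1 \<and>
      V (real (Suc n) + 1) i - V (real (Suc n)) i = (real (Suc n) + 1 - real (Suc n)) * nimfa_rhs A \<tau> (V z) i" for n
    by (rule MVT2) (auto intro!: deriv_within_pos sol_deriv[OF V])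
  then have "\<forall>n. \<exists>z. real (Suc n) < z \<and> z < real (Suc n) + 1 \<and>
      V (real (Suc n) + 1) i - V (real (Suc n)) i = nimfa_rhs A \<tau> (V z) i" by simp
  from choice[OF this] obtain \<xi> where \<xi>': "\<forall>n. real (Suc n) < \<xi> n \<and> \<xi> n < real (Suc n) + 1 \<and>
      V (real (Suc n) + 1) i - V (real (Suc n)) i = nimfa_rhs A \<tau> (V (\<xi> n)) i" by blast
  then have \<xi>: "\<And>n. real (Suc n) < \<xi> n" "\<And>n. \<xi> n < real (Suc n) + 1"
    "\<And>n. V (real (Suc n) + 1) i - V (real (Suc n)) i = nimfa_rhs A \<tau> (V (\<xi> n)) i" by auto
  have l1: "(\<lambda>n. V (real (Suc n)) j) \<longlonglongrightarrow> l j" for j using LIMSEQ_Suc[OF lim[of j]] .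
  have l2: "(\<lambda>n. V (real (Suc n) + 1) j) \<longlonglongrightarrow> l j" for j
    using LIMSEQ_Suc[OF l1[of j]] by (simp add: add.commute)
  have lx: "(\<lambda>n. V (\<xi> n) j) \<longlonglongrightarrow> l j" for j
  proof -
    have bt: "min (V (real (Suc n)) j) (V (real (Suc n) + 1) j) \<le> V (\<xi> n) j \<and> V (\<xi> n) j \<le> max (V (real (Suc n)) j) (V (real (Suc n) + 1) j)" for n
      using btw[of "Suc n" "\<xi> n" j] \<xi>(1)[of n] \<xi>(2)[of n] by simp
    show ?thesis
  proof (rule tendsto_sandwich[of "\<lambda>n. min (V (real (Suc n)) j) (V (real (Suc n) + 1) j)" _ _ "\<lambda>n. max (V (real (Suc n)) j) (V (real (Suc n) + 1) j)"])
    show "\<forall>\<^sub>F n in sequentially. min (V (real (Suc n)) j) (V (real (Suc n) + 1) j) \<le> V (\<xi> n) j"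
      using bt by (intro always_eventually) blast
    show "\<forall>\<^sub>F n in sequentially. V (\<xi> n) j \<le> max (V (real (Suc n)) j) (V (real (Suc n) + 1) j)"
      using bt by (intro always_eventually) blast
    show "(\<lambda>n. min (V (real (Suc n)) j) (V (real (Suc n) + 1) j)) \<longlonglongrightarrow> l j"
      using tendsto_min[OF l1[of j] l2[of j]] by simp
    show "(\<lambda>n. max (V (real (Suc n)) j) (V (real (Suc n) + 1) j)) \<longlonglongrightarrow> l j"
      using tendsto_max[OF l1[of j] l2[of j]] by simp
  qed
  qed
  have L1: "(\<lambda>n. nimfa_rhs A \<tau> (V (\<xi> n)) i) \<longlonglongrightarrow> nimfa_rhs A \<tau> l i"
    unfolding nimfa_rhs_def by (intro tendsto_intros lx)
  have "(\<lambda>n. V (real (Suc n) + 1) i - V (real (Suc n)) i) \<longlonglongrightarrow> l i - l i"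
    by (intro tendsto_intros l1 l2)
  then have L2: "(\<lambda>n. nimfa_rhs A \<tau> (V (\<xi> n)) i) \<longlonglongrightarrow> 0" unfolding \<xi>(3) by simp
  show ?thesis using LIMSEQ_unique[OF L1 L2] .
qed


lemma sol_in01:
  fixes A :: "'n::finite \<Rightarrow> 'n \<Rightarrow> real"
  assumes adj: "adjacency_matrix A" and tau: "\<tau> \<ge> 0" and V: "nimfa_solution A \<tau> V"
    and init: "\<And>i. 0 \<le> V 0 i" "\<And>i. V 0 i \<le> 1" and t: "0 \<le> t"
  shows "0 \<le> V t i \<and> V t i \<le> 1"
proof -
  obtain W where W: "nimfa_solution A \<tau> W" "W 0 = V 0" "\<forall>t\<ge>0. \<forall>i. 0 \<le> W t i \<and> W t i \<le> 1"
    using exists_sol[OF adj tau, of "V 0"] init by blast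
  have "V t = W t" by (rule uniqueness[OF adj tau V W(1)]) (use W t in auto)
  then show ?thesis using W(3) t by auto
qed

lemma prev_mono: "(\<And>i. u i \<le> v i) \<Longrightarrow> prevalence u \<le> prevalence v"
  unfolding prevalence_def by (intro divide_right_mono sum_mono) auto

lemma prev_tendsto: "(\<And>i. (\<lambda>n. f n i) \<longlonglongrightarrow> l i) \<Longrightarrow> (\<lambda>n. prevalence (f n)) \<longlonglongrightarrow> prevalence l"
  unfolding prevalence_def by (intro tendsto_intros) auto

lemma energy:
  fixes A :: "'n::finite \<Rightarrow> 'n \<Rightarrow> real"
  assumes adj: "adjacency_matrix A" and tau: "\<tau> \<ge> 0"
    and v: "\<And>i. 0 \<le> v i" "\<And>i. v i \<le> 1"
  shows "(\<Sum>i\<in>UNIV. 2 * v i * nimfa_rhs A \<tau> v i) \<le> 2 * (\<tau> * lambda1 A - 1) * ss v"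
proof -
  have ray: "qf A v \<le> lambda1 A * ss v" using eig_facts[OF adj] by blast
  have "v i * nimfa_rhs A \<tau> v i \<le> - ((v i)^2) + \<tau> * (v i * Ax A v i)" for i
  proof -
    have S: "0 \<le> Ax A v i" unfolding Ax_def using sumA_bound[OF adj v] by simp
    have "\<tau> * ((v i)^2 * Ax A v i) \<ge> 0" using S tau by simp
    then show ?thesis unfolding nimfa_rhs_def Ax_def[symmetric] by (simp add: algebra_simps power2_eq_square)
  qed
  then have "(\<Sum>i\<in>UNIV. v i * nimfa_rhs A \<tau> v i) \<le> (\<Sum>i\<in>UNIV. - ((v i)^2) + \<tau> * (v i * Ax A v i))"
    by (rule sum_mono)
  also have "\<dots> = - ss v + \<tau> * qf A v" unfolding ss_def qf_def by (simp add: sum.distrib sum_distrib_left sum_negf sum_subtractf)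
  also have "\<dots> \<le> - ss v + \<tau> * (lambda1 A * ss v)" using ray tau by (simp add: mult_left_mono)
  finally have h: "(\<Sum>i\<in>UNIV. v i * nimfa_rhs A \<tau> v i) \<le> - ss v + \<tau> * (lambda1 A * ss v)" .
  have "(\<Sum>i\<in>UNIV. 2 * v i * nimfa_rhs A \<tau> v i) = 2 * (\<Sum>i\<in>UNIV. v i * nimfa_rhs A \<tau> v i)"
    by (simp add: sum_distrib_left mult.assoc)
  then show ?thesis using h by (simp add: algebra_simps)
qed

lemma part1_bound:
  fixes A :: "'n::finite \<Rightarrow> 'n \<Rightarrow> real"
  assumes adj: "adjacency_matrix A" and tau: "\<tau> \<ge> 0"
    and V: "nimfa_solution A \<tau> V" and V0: "V 0 = (\<lambda>i. r)" and r: "0 \<le> r" "r \<le> 1" and t: "0 \<le> t"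
  shows "prevalence (V t) \<le> r * exp ((\<tau> * lambda1 A - 1) * t)"
proof -
  define c where "c = \<tau> * lambda1 A - 1"
  have Vb: "\<And>s i. 0 \<le> s \<Longrightarrow> 0 \<le> V s i \<and> V s i \<le> 1"
    by (rule sol_in01[OF adj tau V]) (use V0 r in auto)
  let ?\<phi> = "\<lambda>s. ss (V s) - NN TYPE('n) * r^2 * exp (2 * c * s)"
  have "?\<phi> t \<le> 0"
  proof (rule gronwall0[where C="2 * c" and T=t and \<phi>="?\<phi>"])
    fix s :: real assume s: "0 \<le> s" "s \<le> t"
    show "(?\<phi> has_real_derivative (\<Sum>i\<in>UNIV. 2 * V s i * nimfa_rhs A \<tau> (V s) i) - NN TYPE('n) * r^2 * (exp (2 * c * s) * (2 * c))) (at s within {0..})"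
      unfolding ss_def
    proof (intro DERIV_diff DERIV_sum DERIV_cmult)
      fix i :: 'n
      from DERIV_pow[THEN DERIV_chain2, OF sol_deriv[OF V s(1), of i], of 2]
      show "((\<lambda>s. (V s i)^2) has_real_derivative 2 * V s i * nimfa_rhs A \<tau> (V s) i) (at s within {0..})"
        by simp
      show "((\<lambda>s. exp (2 * c * s)) has_real_derivative exp (2 * c * s) * (2 * c)) (at s within {0..})"
        by (auto intro!: derivative_eq_intros)
    qed
    have "(\<Sum>i\<in>UNIV. 2 * V s i * nimfa_rhs A \<tau> (V s) i) \<le> 2 * c * ss (V s)"
      unfolding c_def by (rule energy[OF adj tau]) (use Vb s in auto)
    then show "(\<Sum>i\<in>UNIV. 2 * V s i * nimfa_rhs A \<tau> (V s) i) - NN TYPE('n) * r^2 * (exp (2 * c * s) * (2 * c)) \<le> 2 * c * ?\<phi> s"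
      by (simp add: algebra_simps)
  qed (use V0 t in \<open>auto simp: ss_def\<close>)
  then have ssb: "ss (V t) \<le> NN TYPE('n) * r^2 * exp (2 * c * t)" by simp
  have nn: "0 \<le> V t i" for i using Vb[OF t] by simp
  have "(\<Sum>i\<in>UNIV. V t i)^2 = (\<Sum>i\<in>UNIV. \<bar>V t i\<bar>)^2" using nn by simp
  also have "\<dots> \<le> NN TYPE('n) * ss (V t)" unfolding ss_def by (rule cs_abs)
  also have "\<dots> \<le> NN TYPE('n) * (NN TYPE('n) * r^2 * exp (2 * c * t))" using ssb by (simp add: mult_left_mono)
  also have "\<dots> = (NN TYPE('n) * r * exp (c * t))^2"
    by (simp add: power2_eq_square exp_add[symmetric] algebra_simps)
  finally have "(\<Sum>i\<in>UNIV. V t i) \<le> NN TYPE('n) * r * exp (c * t)"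
    by (rule power2_le_imp_le) (use r in simp)
  then show ?thesis unfolding prevalence_def c_def[symmetric]
    by (simp add: divide_le_eq mult.commute mult.left_commute)
qed


theorem mainTheorem4:
  fixes A :: "'n::finite \<Rightarrow> 'n \<Rightarrow> real" and \<tau> r :: real
  assumes "adjacency_matrix A" and "connected_graph A"
    and "\<tau> > 0" and "R0 A \<tau> > 1"
    and "0 < r" and "r < y_inf A \<tau>"
  shows "(\<forall>V. nimfa_solution A \<tau> V \<and> V 0 = (\<lambda>i. r) \<longrightarrow>
            (\<forall>t. 0 \<le> t \<and> t < 1 / (R0 A \<tau> - 1) * ln ((y_inf A \<tau> - r) / r) \<longrightarrow>
                 \<bar>prevalence (V t) - y_inf A \<tau>\<bar> > r))
         \<and> upper_transition_time A \<tau> r \<ge> 1 / (R0 A \<tau> - 1) * ln ((y_inf A \<tau> - r) / r)"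
proof -
  note adj = assms(1) and conn = assms(2) and taup = assms(3) and R0g = assms(4) and rp = assms(5) and ry = assms(6)
  have tau: "\<tau> \<ge> 0" using taup by simp
  define lam where "lam = lambda1 A"
  define R where "R = R0 A \<tau>"
  have R: "R = \<tau> * lam" unfolding R_def lam_def R0_def ..
  have R1: "R > 1" using R0g unfolding R_def .
  obtain x where xnn: "\<And>i. 0 \<le> x i" and xss: "ss x = 1" and xeig: "\<And>i. Ax A x i = lam * x i"
    using eig_facts[OF adj] unfolding lam_def by blast
  have x1: "x i \<le> 1" for i
  proof -
    have "(x i)^2 \<le> ss x" unfolding ss_def by (rule member_le_sum) auto
    then have "(x i)^2 \<le> 1^2" using xss by simp
    then show ?thesis by (rule power2_le_imp_le) simp
  qed
  obtain k where xk: "x k > 0"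
  proof -
    have "\<not> (\<forall>i. x i = 0)"
    proof
      assume "\<forall>i. x i = 0"
      then have "ss x = 0" unfolding ss_def by simp
      with xss show False by simp
    qed
    then obtain i where "x i \<noteq> 0" by blast
    then have "x i > 0" using xnn[of i] by simp
    then show ?thesis by (rule that)
  qed
  define \<epsilon> where "\<epsilon> = min r ((R - 1) / R)"
  have \<epsilon>p: "\<epsilon> > 0" unfolding \<epsilon>_def using rp R1 by simp
  have \<epsilon>r: "\<epsilon> \<le> r" and \<epsilon>R: "\<epsilon> \<le> (R - 1) / R" unfolding \<epsilon>_def by auto
  have \<epsilon>1: "\<epsilon> < 1" using \<epsilon>R R1 by (smt (verit, ccfv_SIG) divide_less_eq_1_pos)
  define x0 where "x0 i = \<epsilon> * x i" for i
  have x0b: "0 \<le> x0 i" "x0 i \<le> \<epsilon>" for i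
    unfolding x0_def using \<epsilon>p xnn[of i] x1[of i] by (auto simp: mult_left_le)
  have x0rhs: "0 \<le> nimfa_rhs A \<tau> x0 i" for i
  proof -
    have S: "(\<Sum>j\<in>UNIV. A i j * x0 j) = \<epsilon> * lam * x i"
    proof -
      have "(\<Sum>j\<in>UNIV. A i j * x0 j) = \<epsilon> * (\<Sum>j\<in>UNIV. A i j * x j)"
        unfolding x0_def sum_distrib_left by (simp add: mult.left_commute)
      then show ?thesis using xeig[of i] unfolding Ax_def by simp
    qed
    have "R * x0 i \<le> R * ((R - 1) / R)" using x0b[of i] \<epsilon>R R1 by (intro mult_left_mono) auto
    also have "R * ((R - 1) / R) = R - 1" using R1 by simp
    finally have "R * (1 - x0 i) \<ge> 1" by (simp add: algebra_simps)
    then have "x0 i * (R * (1 - x0 i) - 1) \<ge> 0" using x0b[of i] by simp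
    moreover have "nimfa_rhs A \<tau> x0 i = x0 i * (R * (1 - x0 i) - 1)"
      unfolding nimfa_rhs_def S unfolding R x0_def by (simp add: algebra_simps)
    ultimately show ?thesis by simp
  qed
  obtain L where L: "nimfa_solution A \<tau> L" "L 0 = x0" and Lb: "\<forall>t\<ge>0. \<forall>i. 0 \<le> L t i \<and> L t i \<le> 1"
  proof -
    have "x0 i \<le> 1" for i using x0b[of i] \<epsilon>1 by simp
    then show ?thesis using exists_sol[OF adj tau, of x0] x0b that by blast
  qed
  obtain U where U: "nimfa_solution A \<tau> U" "U 0 = (\<lambda>i. 1)" and Ub: "\<forall>t\<ge>0. \<forall>i. 0 \<le> U t i \<and> U t i \<le> 1"
    using exists_sol[OF adj tau, of "\<lambda>i. 1"] by auto
  have cmp: "X t i \<le> Y t i" if X: "nimfa_solution A \<tau> X" and Y: "nimfa_solution A \<tau> Y"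
    and Xb: "\<forall>t\<ge>0. \<forall>i. 0 \<le> X t i \<and> X t i \<le> 1" and Yb: "\<forall>t\<ge>0. \<forall>i. 0 \<le> Y t i \<and> Y t i \<le> 1"
    and i0: "\<And>i. X 0 i \<le> Y 0 i" and t: "0 \<le> t" for X Y t i
    by (rule comparison[OF adj tau sol_deriv[OF X] sol_deriv[OF Y]]) (use Xb Yb i0 t in auto)
  have shb: "\<forall>t\<ge>0. \<forall>i. 0 \<le> X (t + h) i \<and> X (t + h) i \<le> 1" if "\<forall>t\<ge>0. \<forall>i. 0 \<le> X t i \<and> X t i \<le> 1" "h \<ge> 0" for X :: "real \<Rightarrow> 'n \<Rightarrow> real" and h
    using that by auto
  have Lge: "x0 i \<le> L t i" if "0 \<le> t" for t i
  proof -
    have "(\<lambda>s::real. x0) t i \<le> L t i"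
    proof (rule comparison[OF adj tau, where X="\<lambda>s. x0" and Y=L and dX="\<lambda>s i. 0" and dY="\<lambda>s i. nimfa_rhs A \<tau> (L s) i"])
      show "((\<lambda>s. (\<lambda>s::real. x0) s i) has_real_derivative 0) (at s within {0..})" for s i by simp
      show "((\<lambda>s. L s i) has_real_derivative nimfa_rhs A \<tau> (L s) i) (at s within {0..})" if "0 \<le> s" for s i
        by (rule sol_deriv[OF L(1) that])
      show "0 \<le> x0 i \<and> x0 i \<le> 1" for i using x0b[of i] \<epsilon>1 by simp
      show "0 \<le> L s i \<and> L s i \<le> 1" if "0 \<le> s" for s i using Lb that by simp
      show "0 \<le> nimfa_rhs A \<tau> x0 i" for i by (rule x0rhs)
      show "x0 i \<le> L 0 i" for i using L(2) by simp
    qed (use that in auto)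
    then show ?thesis by simp
  qed
  have Linc: "L t i \<le> L (t + h) i" if "0 \<le> t" "0 \<le> h" for t h i
    using cmp[OF L(1) shift_sol[OF L(1) that(2)] Lb shb[OF Lb that(2)] _ that(1)] Lge[OF that(2)] L(2) by simp
  have Udec: "U (t + h) i \<le> U t i" if "0 \<le> t" "0 \<le> h" for t h i
    using cmp[OF shift_sol[OF U(1) that(2)] U(1) shb[OF Ub that(2)] Ub _ that(1)] Ub that(2) U(2) by simp
  have LU: "L t i \<le> U t i" if "0 \<le> t" for t i
    using cmp[OF L(1) U(1) Lb Ub _ that] L(2) U(2) x0b \<epsilon>1 by (smt (verit))
  have "\<exists>l. (\<lambda>n. L (real n) i) \<longlonglongrightarrow> l" for i
  proof -
    have "incseq (\<lambda>n. L (real n) i)"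
    proof (rule incseq_SucI)
      fix n show "L (real n) i \<le> L (real (Suc n)) i" using Linc[of "real n" 1 i] by (simp add: add.commute)
    qed
    then obtain l where "(\<lambda>n. L (real n) i) \<longlonglongrightarrow> l" using incseq_convergent[of _ 1] Lb by (metis of_nat_0_le_iff)
    then show ?thesis by blast
  qed
  then obtain lL where lL: "\<And>i. (\<lambda>n. L (real n) i) \<longlonglongrightarrow> lL i" by metis
  have "\<exists>l. (\<lambda>n. U (real n) i) \<longlonglongrightarrow> l" for i
  proof -
    have "decseq (\<lambda>n. U (real n) i)"
    proof (rule decseq_SucI)
      fix n show "U (real (Suc n)) i \<le> U (real n) i" using Udec[of "real n" 1 i] by (simp add: add.commute)
    qed
    then obtain l where "(\<lambda>n. U (real n) i) \<longlonglongrightarrow> l" using decseq_convergent[of _ 0] Ub by (metis of_nat_0_le_iff)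
    then show ?thesis by blast
  qed
  then obtain lU where lU: "\<And>i. (\<lambda>n. U (real n) i) \<longlonglongrightarrow> lU i" by metis
  have lLb: "x0 i \<le> lL i" "lL i \<le> 1" for i
    using LIMSEQ_le_const[OF lL[of i], of "x0 i"] LIMSEQ_le_const2[OF lL[of i], of 1] Lge Lb by auto
  have lUb: "lL i \<le> lU i" "lU i \<le> 1" for i
    using LIMSEQ_le[OF lL[of i] lU[of i]] LIMSEQ_le_const2[OF lU[of i], of 1] LU Ub by auto
  have btwL: "min (L (real n) j) (L (real n + 1) j) \<le> L s j \<and> L s j \<le> max (L (real n) j) (L (real n + 1) j)"
    if "real n \<le> s" "s \<le> real n + 1" for n s j
    using Linc[of "real n" "s - real n" j] Linc[of s "real n + 1 - s" j] that by auto
  have btwU: "min (U (real n) j) (U (real n + 1) j) \<le> U s j \<and> U s j \<le> max (U (real n) j) (U (real n + 1) j)"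
    if "real n \<le> s" "s \<le> real n + 1" for n s j
    using Udec[of "real n" "s - real n" j] Udec[of s "real n + 1 - s" j] that by auto
  have eqL: "nimfa_rhs A \<tau> lL i = 0" for i by (rule limit_eq[OF L(1) lL btwL])
  have eqU: "nimfa_rhs A \<tau> lU i = 0" for i by (rule limit_eq[OF U(1) lU btwU])
  have lLk: "lL k > 0" using lLb(1)[of k] xk \<epsilon>p unfolding x0_def by (smt (verit) mult_pos_pos)
  have lLp: "lL j > 0" for j by (rule eq_pos[OF adj conn taup _ eqL lLk]) (use lLb x0b in \<open>smt (verit)\<close>)
  have lUp: "lU j > 0" for j using lLp[of j] lUb(1)[of j] by simp
  have P: "\<And>v. (\<forall>i. 0 < v i \<and> v i \<le> 1) \<and> (\<forall>i. nimfa_rhs A \<tau> v i = 0) \<Longrightarrow> v = lL"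
  proof -
    fix v assume v: "(\<forall>i. 0 < v i \<and> v i \<le> 1) \<and> (\<forall>i. nimfa_rhs A \<tau> v i = 0)"
    have "v j \<le> lL j" for j by (rule eq_ge[OF adj taup]) (use v lLp lLb eqL in auto)
    moreover have "lL j \<le> v j" for j by (rule eq_ge[OF adj taup]) (use v lLp lLb eqL in auto)
    ultimately show "v = lL" by (auto simp: fun_eq_iff intro: antisym)
  qed
  have EE: "endemic_equilibrium A \<tau> = lL" unfolding endemic_equilibrium_def
    by (rule the_equality) (use lLp lLb eqL P in auto)
  have lUL: "lU = lL" by (rule P) (use lUp lUb eqU in auto)
  define y where "y = y_inf A \<tau>"
  have y: "y = prevalence lL" unfolding y_def y_inf_def EE ..
  have y1: "y \<le> 1"
  proof -
    have "prevalence lL \<le> prevalence (\<lambda>i::'n. 1::real)" using prev_mono[of lL "\<lambda>i::'n. 1::real"] lLb by simp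
    then show ?thesis unfolding y prevalence_def by simp
  qed
  have r1: "r \<le> 1" using ry y1 unfolding y_def by simp
  define T where "T = 1 / (R - 1) * ln ((y - r) / r)"
  have part1: "\<bar>prevalence (V t) - y\<bar> > r"
    if V: "nimfa_solution A \<tau> V" "V 0 = (\<lambda>i. r)" and t: "0 \<le> t" "t < T" for V t
  proof -
    have pb: "prevalence (V t) \<le> r * exp ((R - 1) * t)"
      using part1_bound[OF adj tau V(1) V(2) _ r1 t(1)] rp unfolding R R0_def lam_def by simp
    have yr: "(y - r) / r > 0" using ry rp unfolding y_def by simp
    have "(R - 1) * t < (R - 1) * T" using t(2) R1 by simp
    also have "\<dots> = ln ((y - r) / r)" unfolding T_def using R1 by simp
    finally have "exp ((R - 1) * t) < (y - r) / r" using yr by (metis exp_less_cancel_iff exp_ln)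
    then have "r * exp ((R - 1) * t) < y - r" using rp by (simp add: field_simps)
    then show ?thesis using pb by linarith
  qed
  have part2_sol: "\<exists>W. nimfa_solution A \<tau> W \<and> W 0 = (\<lambda>i. r) \<and> (\<forall>t\<ge>0. \<forall>i. 0 \<le> W t i \<and> W t i \<le> 1)"
    by (rule exists_sol[OF adj tau]) (use rp r1 in auto)
  define S where "S = {t. t \<ge> 0 \<and> (\<forall>V. nimfa_solution A \<tau> V \<and> (\<forall>i. r \<le> V 0 i \<and> V 0 i \<le> 1) \<longrightarrow>
          \<bar>prevalence (V t) - y_inf A \<tau>\<bar> \<le> r)}"
  have SgeT: "T \<le> s" if sS: "s \<in> S" for s
  proof (rule ccontr)
    assume sT: "\<not> T \<le> s"
    obtain W where W: "nimfa_solution A \<tau> W" "W 0 = (\<lambda>i. r)" using part2_sol by blast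
    have s0: "0 \<le> s" and allV: "\<forall>V. nimfa_solution A \<tau> V \<and> (\<forall>i. r \<le> V 0 i \<and> V 0 i \<le> 1) \<longrightarrow>
          \<bar>prevalence (V s) - y\<bar> \<le> r" using sS unfolding S_def y_def by blast+
    have "\<forall>i. r \<le> W 0 i \<and> W 0 i \<le> 1" using W(2) r1 by simp
    then have "\<bar>prevalence (W s) - y\<bar> \<le> r" using allV W(1) by blast
    moreover have "\<bar>prevalence (W s) - y\<bar> > r" by (rule part1[OF W s0]) (use sT in simp)
    ultimately show False by simp
  qed
  have Sne: "S \<noteq> {}"
  proof -
    have pL: "(\<lambda>n. prevalence (L (real n))) \<longlonglongrightarrow> y" unfolding y by (rule prev_tendsto[OF lL])
    have pU: "(\<lambda>n. prevalence (U (real n))) \<longlonglongrightarrow> y" unfolding y lUL[symmetric] by (rule prev_tendsto[OF lU])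
    have "\<forall>\<^sub>F n in sequentially. dist (prevalence (L (real n))) y < r \<and> dist (prevalence (U (real n))) y < r"
      using tendstoD[OF pL rp] tendstoD[OF pU rp] by (rule eventually_conj)
    then obtain N where N: "\<forall>n\<ge>N. dist (prevalence (L (real n))) y < r \<and> dist (prevalence (U (real n))) y < r"
      unfolding eventually_sequentially by blast
    define n where "n = N"
    have n: "\<bar>prevalence (L (real n)) - y\<bar> < r" "\<bar>prevalence (U (real n)) - y\<bar> < r"
      using N unfolding n_def dist_real_def by auto
    have "real n \<in> S" unfolding S_def y_def[symmetric]
    proof (intro CollectI conjI allI impI)
      fix V assume V: "nimfa_solution A \<tau> V \<and> (\<forall>i. r \<le> V 0 i \<and> V 0 i \<le> 1)"
      have rV: "r \<le> V 0 i" "V 0 i \<le> 1" for i using V by blast+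
      have Vb: "\<forall>t\<ge>0. \<forall>i. 0 \<le> V t i \<and> V t i \<le> 1"
      proof (intro allI impI)
        fix t :: real and i assume t: "0 \<le> t"
        show "0 \<le> V t i \<and> V t i \<le> 1"
          by (rule sol_in01[OF adj tau _ _ _ t]) (use V rV rp in \<open>auto intro: less_imp_le order.trans[of 0 r]\<close>)
      qed
      have i0: "L 0 i \<le> V 0 i" for i using L(2) x0b(2)[of i] \<epsilon>r rV(1)[of i] by simp
      have "prevalence (L (real n)) \<le> prevalence (V (real n))"
        by (rule prev_mono, rule cmp[OF L(1) _ Lb Vb i0]) (use V in auto)
      moreover have i1: "V 0 i \<le> U 0 i" for i using U(2) rV(2)[of i] by simp
      have "prevalence (V (real n)) \<le> prevalence (U (real n))"
        by (rule prev_mono, rule cmp[OF _ U(1) Vb Ub i1]) (use V in auto)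
      ultimately show "\<bar>prevalence (V (real n)) - y\<bar> \<le> r" using n by linarith
    qed simp
    then show ?thesis by blast
  qed
  have "T \<le> Inf S" by (rule cInf_greatest[OF Sne SgeT])
  then have part2: "upper_transition_time A \<tau> r \<ge> T" unfolding upper_transition_time_def S_def .
  show ?thesis unfolding R_def[symmetric] y_def[symmetric] T_def[symmetric]
    using part1 part2 by blast
qed


end
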